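(* The functors $\text{Ab}_{\text{Cr}}:\text{CrCom}\to\text{Ch}^+_{\mathbb{Z}}$ and $\text{U}_{\text{Cr}}:\text{Ch}^+_{\mathbb{Z}}\to\text{CrCom}$ form an adjoint pair, with $\text{Ab}_{\text{Cr}}$ left adjoint to $\text{U}_{\text{Cr}}$.
   Context: $\text{Ch}^+_{\mathbb{Z}}$ is the category of nonnegatively graded chain complexes of abelian groups. A crossed complex $C$ consists of: a groupoid with object set $C_0$ and morphism set $C_1$ (source $s$, target $t$); for each $i\ge2$ a family of groups $C_i=\coprod_{c\in C_0}C_i(c)$, abelian for $i>2$, with actions $\phi_\ell:C_i(s(\ell))\to C_i(t(\ell))$ for $\ell\in C_1$ satisfying $\phi_{\ell\circ p}=\phi_\ell\circ\phi_p$; boundary maps $\delta:C_{i+1}\to C_i$ ($\delta:C_2\to C_1$ landing in automorphisms, i.e. $s\delta=t\delta$) compatible with the actions, such that $\delta(a)$ acts on $C_2$ by conjugation by $a$ and trivially on $C_i$, $i>2$, and $\delta^2=0$. Morphisms of crossed complexes (forming $\text{CrCom}$) are the structure-preserving maps. For a chain complex $A_\bullet$ with differential $d$, $\text{U}_{\text{Cr}}(A_\bullet)$ is the crossed complex with $C_0=|A_0|$ (underlying set), $C_1=|A_0|\times|A_1|$ where $(a,\ell)$ is a morphism from $a$ to $a+d\ell$ and composition adds the second components, $C_n=\coprod_{|A_0|}A_n$ for $n\ge2$ with $\delta$ induced by $d$, and with every $(a,\ell)$ acting as the identity map from the $a$-component to the $(a+d\ell)$-component. For a crossed complex $C$, let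 $C_n/C_1=\coprod_{p\in C_0}C_n(p)/\text{Aut}(p)$ be the quotient by the action of the automorphism groups $\text{Aut}(p)\subseteq C_1$; then $\text{Ab}_{\text{Cr}}(C)$ is the chain complex $\mathbb{Z}[C_0]\xleftarrow{t-s}\mathbb{Z}[C_1]/\!\sim\xleftarrow{\delta}C_2/C_1\xleftarrow{\delta}C_3/C_1\leftarrow\cdots$, where $\sim$ is generated by $g\circ f\sim g+f$ for composable $g,f\in C_1$.
   Formalization: For $n\ge2$, degree n of $\text{Ab}_{\text{Cr}}(C)$ is the direct sum over all $p\in C_0$ of the $C_n(p)$ modulo the subgroup generated by all $\phi_\ell(x)-x$ with $\ell\in C_1$, instead of $\coprod_{p\in C_0}C_n(p)/\text{Aut}(p)$. The statement above fails without it. *)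

theory Defs
  imports "HOL-Algebra.Free_Abelian_Groups" "HOL-Algebra.Product_Groups" "HOL-Algebra.Coset"
begin

record 'a chain_cx =
  cgr :: "nat \<Rightarrow> 'a monoid"
  dif :: "nat \<Rightarrow> 'a \<Rightarrow> 'a"

definition chain_complex :: "'a chain_cx \<Rightarrow> bool" where
  "chain_complex A \<longleftrightarrow>
     (\<forall>n. comm_group (cgr A n)) \<and>
     (\<forall>n. dif A n \<in> hom (cgr A (Suc n)) (cgr A n)) \<and>
     (\<forall>n. \<forall>x\<in>carrier (cgr A (Suc (Suc n))). dif A n (dif A (Suc n) x) = \<one>\<^bsub>cgr A n\<^esub>)"

definition chain_map :: "'a chain_cx \<Rightarrow> 'b chain_cx \<Rightarrow> (nat \<Rightarrow> 'a \<Rightarrow> 'b) \<Rightarrow> bool" where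
  "chain_map A B g \<longleftrightarrow>
     (\<forall>n. g n \<in> hom (cgr A n) (cgr B n)) \<and>
     (\<forall>n. \<forall>x\<in>carrier (cgr A (Suc n)). g n (dif A n x) = dif B n (g (Suc n) x))"

text \<open>Objects of type 'o (C_0), morphisms of type 'm (C_1); for n >= 2 and an object c,
  cgrp n c is the group C_n(c) (elements of type 'e; the coproduct over c is encoded by
  indexing everything by the object c).  comp g f is g o f (f first).
  act n l : C_n(s l) -> C_n(t l); bd1 c : C_2(c) -> C_1; bd n c : C_(n+1)(c) -> C_n(c), n >= 2.\<close>
record ('o, 'm, 'e) crossed_cx =
  obj   :: "'o set"
  arr   :: "'m set"
  src   :: "'m \<Rightarrow> 'o"
  tgt   :: "'m \<Rightarrow> 'o"
  comp  :: "'m \<Rightarrow> 'm \<Rightarrow> 'm"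
  ident :: "'o \<Rightarrow> 'm"
  cgrp  :: "nat \<Rightarrow> 'o \<Rightarrow> 'e monoid"
  act   :: "nat \<Rightarrow> 'm \<Rightarrow> 'e \<Rightarrow> 'e"
  bd1   :: "'o \<Rightarrow> 'e \<Rightarrow> 'm"
  bd    :: "nat \<Rightarrow> 'o \<Rightarrow> 'e \<Rightarrow> 'e"

definition groupoid :: "('o, 'm, 'e) crossed_cx \<Rightarrow> bool" where
  "groupoid C \<longleftrightarrow>
     (\<forall>l\<in>arr C. src C l \<in> obj C \<and> tgt C l \<in> obj C) \<and>
     (\<forall>c\<in>obj C. ident C c \<in> arr C \<and> src C (ident C c) = c \<and> tgt C (ident C c) = c) \<and>
     (\<forall>f\<in>arr C. \<forall>g\<in>arr C. tgt C f = src C g \<longrightarrow>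
        comp C g f \<in> arr C \<and> src C (comp C g f) = src C f \<and> tgt C (comp C g f) = tgt C g) \<and>
     (\<forall>f\<in>arr C. \<forall>g\<in>arr C. \<forall>h\<in>arr C. tgt C f = src C g \<longrightarrow> tgt C g = src C h \<longrightarrow>
        comp C h (comp C g f) = comp C (comp C h g) f) \<and>
     (\<forall>f\<in>arr C. comp C (ident C (tgt C f)) f = f \<and> comp C f (ident C (src C f)) = f) \<and>
     (\<forall>f\<in>arr C. \<exists>g\<in>arr C. src C g = tgt C f \<and> tgt C g = src C f \<and>
        comp C g f = ident C (src C f) \<and> comp C f g = ident C (tgt C f))"

definition crossed_complex :: "('o, 'm, 'e) crossed_cx \<Rightarrow> bool" where
  "crossed_complex C \<longleftrightarrow>
     groupoid C \<and>
     (\<forall>n\<ge>2. \<forall>c\<in>obj C. group (cgrp C n c) \<and> (n > 2 \<longrightarrow> comm_group (cgrp C n c))) \<and>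
     \<comment> \<open>actions\<close>
     (\<forall>n\<ge>2. \<forall>l\<in>arr C. act C n l \<in> hom (cgrp C n (src C l)) (cgrp C n (tgt C l))) \<and>
     (\<forall>n\<ge>2. \<forall>f\<in>arr C. \<forall>g\<in>arr C. tgt C f = src C g \<longrightarrow>
        (\<forall>x\<in>carrier (cgrp C n (src C f)). act C n (comp C g f) x = act C n g (act C n f x))) \<and>
     (\<forall>n\<ge>2. \<forall>c\<in>obj C. \<forall>x\<in>carrier (cgrp C n c). act C n (ident C c) x = x) \<and>
     \<comment> \<open>boundary C_2 -> C_1, landing in automorphisms, a homomorphism\<close>
     (\<forall>c\<in>obj C. \<forall>x\<in>carrier (cgrp C 2 c).
        bd1 C c x \<in> arr C \<and> src C (bd1 C c x) = c \<and> tgt C (bd1 C c x) = c) \<and>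
     (\<forall>c\<in>obj C. \<forall>x\<in>carrier (cgrp C 2 c). \<forall>y\<in>carrier (cgrp C 2 c).
        bd1 C c (x \<otimes>\<^bsub>cgrp C 2 c\<^esub> y) = comp C (bd1 C c x) (bd1 C c y)) \<and>
     \<comment> \<open>higher boundaries\<close>
     (\<forall>n\<ge>2. \<forall>c\<in>obj C. bd C n c \<in> hom (cgrp C (Suc n) c) (cgrp C n c)) \<and>
     \<comment> \<open>compatibility of boundaries with the actions\<close>
     (\<forall>l\<in>arr C. \<forall>x\<in>carrier (cgrp C 2 (src C l)).
        comp C (bd1 C (tgt C l) (act C 2 l x)) l = comp C l (bd1 C (src C l) x)) \<and>
     (\<forall>n\<ge>2. \<forall>l\<in>arr C. \<forall>x\<in>carrier (cgrp C (Suc n) (src C l)).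
        bd C n (tgt C l) (act C (Suc n) l x) = act C n l (bd C n (src C l) x)) \<and>
     \<comment> \<open>delta(a) acts on C_2 by conjugation by a and trivially on C_i, i > 2\<close>
     (\<forall>c\<in>obj C. \<forall>a\<in>carrier (cgrp C 2 c). \<forall>b\<in>carrier (cgrp C 2 c).
        act C 2 (bd1 C c a) b = a \<otimes>\<^bsub>cgrp C 2 c\<^esub> b \<otimes>\<^bsub>cgrp C 2 c\<^esub> inv\<^bsub>cgrp C 2 c\<^esub> a) \<and>
     (\<forall>n>2. \<forall>c\<in>obj C. \<forall>a\<in>carrier (cgrp C 2 c). \<forall>b\<in>carrier (cgrp C n c).
        act C n (bd1 C c a) b = b) \<and>
     \<comment> \<open>delta o delta = 0\<close>
     (\<forall>c\<in>obj C. \<forall>x\<in>carrier (cgrp C 3 c). bd1 C c (bd C 2 c x) = ident C c) \<and>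
     (\<forall>n\<ge>2. \<forall>c\<in>obj C. \<forall>x\<in>carrier (cgrp C (Suc (Suc n)) c).
        bd C n c (bd C (Suc n) c x) = \<one>\<^bsub>cgrp C n c\<^esub>)"

record ('o, 'm, 'e, 'p, 'n, 'f) cr_mor =
  mo :: "'o \<Rightarrow> 'p"
  mm :: "'m \<Rightarrow> 'n"
  me :: "nat \<Rightarrow> 'o \<Rightarrow> 'e \<Rightarrow> 'f"

definition cr_morphism ::
  "('o, 'm, 'e) crossed_cx \<Rightarrow> ('p, 'n, 'f) crossed_cx \<Rightarrow> ('o, 'm, 'e, 'p, 'n, 'f) cr_mor \<Rightarrow> bool" where
  "cr_morphism C D F \<longleftrightarrow>
     (\<forall>c\<in>obj C. mo F c \<in> obj D) \<and>
     (\<forall>l\<in>arr C. mm F l \<in> arr D \<and> src D (mm F l) = mo F (src C l) \<and> tgt D (mm F l) = mo F (tgt C l)) \<and>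
     (\<forall>f\<in>arr C. \<forall>g\<in>arr C. tgt C f = src C g \<longrightarrow> mm F (comp C g f) = comp D (mm F g) (mm F f)) \<and>
     (\<forall>c\<in>obj C. mm F (ident C c) = ident D (mo F c)) \<and>
     (\<forall>n\<ge>2. \<forall>c\<in>obj C. me F n c \<in> hom (cgrp C n c) (cgrp D n (mo F c))) \<and>
     (\<forall>n\<ge>2. \<forall>l\<in>arr C. \<forall>x\<in>carrier (cgrp C n (src C l)).
        me F n (tgt C l) (act C n l x) = act D n (mm F l) (me F n (src C l) x)) \<and>
     (\<forall>c\<in>obj C. \<forall>x\<in>carrier (cgrp C 2 c). mm F (bd1 C c x) = bd1 D (mo F c) (me F 2 c x)) \<and>
     (\<forall>n\<ge>2. \<forall>c\<in>obj C. \<forall>x\<in>carrier (cgrp C (Suc n) c).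
        me F n c (bd C n c x) = bd D n (mo F c) (me F (Suc n) c x))"

definition cr_mor_eq ::
  "('o, 'm, 'e) crossed_cx \<Rightarrow> ('o, 'm, 'e, 'p, 'n, 'f) cr_mor \<Rightarrow> ('o, 'm, 'e, 'p, 'n, 'f) cr_mor \<Rightarrow> bool" where
  "cr_mor_eq C F G \<longleftrightarrow>
     (\<forall>c\<in>obj C. mo F c = mo G c) \<and> (\<forall>l\<in>arr C. mm F l = mm G l) \<and>
     (\<forall>n\<ge>2. \<forall>c\<in>obj C. \<forall>x\<in>carrier (cgrp C n c). me F n c x = me G n c x)"

definition cr_mor_comp ::
  "('p, 'n, 'f, 'q, 'r, 'g) cr_mor \<Rightarrow> ('o, 'm, 'e, 'p, 'n, 'f) cr_mor \<Rightarrow> ('o, 'm, 'e, 'q, 'r, 'g) cr_mor" where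
  "cr_mor_comp G F = \<lparr>mo = mo G \<circ> mo F, mm = mm G \<circ> mm F, me = (\<lambda>n c. me G n (mo F c) \<circ> me F n c)\<rparr>"

definition U_Cr :: "'a chain_cx \<Rightarrow> ('a, 'a \<times> 'a, 'a) crossed_cx" where
  "U_Cr A = \<lparr>obj = carrier (cgr A 0),
             arr = carrier (cgr A 0) \<times> carrier (cgr A 1),
             src = fst,
             tgt = (\<lambda>(a, l). a \<otimes>\<^bsub>cgr A 0\<^esub> dif A 0 l),
             comp = (\<lambda>(b, m) (a, l). (a, l \<otimes>\<^bsub>cgr A 1\<^esub> m)),
             ident = (\<lambda>a. (a, \<one>\<^bsub>cgr A 1\<^esub>)),
             cgrp = (\<lambda>n c. cgr A n),
             act = (\<lambda>n l x. x),
             bd1 = (\<lambda>c x. (c, dif A 1 x)),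
             bd = (\<lambda>n c. dif A n)\<rparr>"

definition U_mor :: "(nat \<Rightarrow> 'a \<Rightarrow> 'b) \<Rightarrow> ('a, 'a \<times> 'a, 'a, 'b, 'b \<times> 'b, 'b) cr_mor" where
  "U_mor g = \<lparr>mo = g 0, mm = (\<lambda>(a, l). (g 0 a, g 1 l)), me = (\<lambda>n c. g n)\<rparr>"

definition transport :: "('a \<Rightarrow> 'b) \<Rightarrow> ('a, 'c) monoid_scheme \<Rightarrow> 'b monoid" where
  "transport h G = \<lparr>carrier = h ` carrier G,
     mult = (\<lambda>x y. h (the_inv_into (carrier G) h x \<otimes>\<^bsub>G\<^esub> the_inv_into (carrier G) h y)),
     one = h \<one>\<^bsub>G\<^esub>\<rparr>"

definition Z0 :: "('o, 'm, 'e) crossed_cx \<Rightarrow> ('o \<Rightarrow>\<^sub>0 int) monoid" where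
  "Z0 C = free_Abelian_group (obj C)"

definition Z1 :: "('o, 'm, 'e) crossed_cx \<Rightarrow> ('m \<Rightarrow>\<^sub>0 int) monoid" where
  "Z1 C = free_Abelian_group (arr C)"

definition N1 :: "('o, 'm, 'e) crossed_cx \<Rightarrow> ('m \<Rightarrow>\<^sub>0 int) set" where
  "N1 C = generate (Z1 C)
     {frag_of (comp C g f) - frag_of g - frag_of f | f g. f \<in> arr C \<and> g \<in> arr C \<and> tgt C f = src C g}"

definition Q1 :: "('o, 'm, 'e) crossed_cx \<Rightarrow> ('m \<Rightarrow>\<^sub>0 int) set monoid" where
  "Q1 C = Z1 C Mod N1 C"

definition Sn :: "nat \<Rightarrow> ('o, 'm, 'e) crossed_cx \<Rightarrow> ('o \<Rightarrow> 'e) monoid" where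
  "Sn n C = sum_group (obj C) (cgrp C n)"

definition inj_c :: "nat \<Rightarrow> ('o, 'm, 'e) crossed_cx \<Rightarrow> 'o \<Rightarrow> 'e \<Rightarrow> ('o \<Rightarrow> 'e)" where
  "inj_c n C c x = (\<lambda>p\<in>obj C. if p = c then x else \<one>\<^bsub>cgrp C n p\<^esub>)"

definition Nn :: "nat \<Rightarrow> ('o, 'm, 'e) crossed_cx \<Rightarrow> ('o \<Rightarrow> 'e) set" where
  "Nn n C = generate (Sn n C)
     {inj_c n C (tgt C l) (act C n l x) \<otimes>\<^bsub>Sn n C\<^esub> inv\<^bsub>Sn n C\<^esub> (inj_c n C (src C l) x) | l x.
        l \<in> arr C \<and> x \<in> carrier (cgrp C n (src C l))}"

definition Qn :: "nat \<Rightarrow> ('o, 'm, 'e) crossed_cx \<Rightarrow> ('o \<Rightarrow> 'e) set monoid" where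
  "Qn n C = Sn n C Mod Nn n C"

type_synonym ('o, 'm, 'e) ab_elt = "('o \<Rightarrow>\<^sub>0 int) + ('m \<Rightarrow>\<^sub>0 int) set + ('o \<Rightarrow> 'e) set"

definition un1 :: "('o, 'm, 'e) ab_elt \<Rightarrow> ('m \<Rightarrow>\<^sub>0 int) set" where
  "un1 y = (case y of Inr (Inl X) \<Rightarrow> X | _ \<Rightarrow> {})"

definition unn :: "('o, 'm, 'e) ab_elt \<Rightarrow> ('o \<Rightarrow> 'e) set" where
  "unn y = (case y of Inr (Inr X) \<Rightarrow> X | _ \<Rightarrow> {})"

text \<open>The differentials, computed on (arbitrarily chosen) representatives of cosets.\<close>
definition ab_d0 :: "('o, 'm, 'e) crossed_cx \<Rightarrow> ('m \<Rightarrow>\<^sub>0 int) \<Rightarrow> ('o \<Rightarrow>\<^sub>0 int)" where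
  "ab_d0 C z = frag_extend (\<lambda>l. frag_of (tgt C l) - frag_of (src C l)) z"

definition ab_d1 :: "('o, 'm, 'e) crossed_cx \<Rightarrow> ('o \<Rightarrow> 'e) \<Rightarrow> ('m \<Rightarrow>\<^sub>0 int)" where
  "ab_d1 C x = (\<Sum>p\<in>{p \<in> obj C. x p \<noteq> \<one>\<^bsub>cgrp C 2 p\<^esub>}. frag_of (bd1 C p (x p)))"

definition ab_dn :: "nat \<Rightarrow> ('o, 'm, 'e) crossed_cx \<Rightarrow> ('o \<Rightarrow> 'e) \<Rightarrow> ('o \<Rightarrow> 'e)" where
  "ab_dn n C x = (\<lambda>p\<in>obj C. bd C n p (x p))"

definition Ab_Cr :: "('o, 'm, 'e) crossed_cx \<Rightarrow> ('o, 'm, 'e) ab_elt chain_cx" where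
  "Ab_Cr C = \<lparr>cgr = (\<lambda>n. if n = 0 then transport Inl (Z0 C)
                        else if n = 1 then transport (Inr \<circ> Inl) (Q1 C)
                        else transport (Inr \<circ> Inr) (Qn n C)),
              dif = (\<lambda>n y. if n = 0 then Inl (ab_d0 C (SOME z. z \<in> un1 y))
                          else if n = 1 then Inr (Inl (N1 C #>\<^bsub>Z1 C\<^esub> ab_d1 C (SOME x. x \<in> unn y)))
                          else Inr (Inr (Nn n C #>\<^bsub>Sn n C\<^esub> ab_dn n C (SOME x. x \<in> unn y))))\<rparr>"

definition cr_unit :: "('o, 'm, 'e) crossed_cx \<Rightarrow>
    ('o, 'm, 'e, ('o, 'm, 'e) ab_elt, ('o, 'm, 'e) ab_elt \<times> ('o, 'm, 'e) ab_elt, ('o, 'm, 'e) ab_elt) cr_mor" where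
  "cr_unit C = \<lparr>mo = (\<lambda>c. Inl (frag_of c)),
                mm = (\<lambda>l. (Inl (frag_of (src C l)), Inr (Inl (N1 C #>\<^bsub>Z1 C\<^esub> frag_of l)))),
                me = (\<lambda>n c x. Inr (Inr (Nn n C #>\<^bsub>Sn n C\<^esub> inj_c n C c x)))\<rparr>"

end

theory Submission
  imports Defs
begin

lemma hom_inv':
  "group G \<Longrightarrow> group H \<Longrightarrow> f \<in> hom G H \<Longrightarrow> x \<in> carrier G \<Longrightarrow> f (inv\<^bsub>G\<^esub> x) = inv\<^bsub>H\<^esub> (f x)"
  by (simp add: group_hom_def group_hom_axioms_def group_hom.hom_inv)

lemma hom_one':
  "group G \<Longrightarrow> group H \<Longrightarrow> f \<in> hom G H \<Longrightarrow> f \<one>\<^bsub>G\<^esub> = \<one>\<^bsub>H\<^esub>"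
  by (simp add: hom_one)

lemma hom_mult': "f \<in> hom G H \<Longrightarrow> x \<in> carrier G \<Longrightarrow> y \<in> carrier G \<Longrightarrow> f (x \<otimes>\<^bsub>G\<^esub> y) = f x \<otimes>\<^bsub>H\<^esub> f y"
  by (simp add: hom_mult)

lemma hom_carrier': "f \<in> hom G H \<Longrightarrow> x \<in> carrier G \<Longrightarrow> f x \<in> carrier H"
  by (auto simp: hom_def)

subsection \<open>Transport\<close>

lemma transport_carrier: "carrier (transport h G) = h ` carrier G"
  by (simp add: transport_def)

lemma transport_one: "\<one>\<^bsub>transport h G\<^esub> = h \<one>\<^bsub>G\<^esub>"
  by (simp add: transport_def)

lemma transport_mult:
  assumes "inj h" "a \<in> carrier G" "b \<in> carrier G"
  shows "h a \<otimes>\<^bsub>transport h G\<^esub> h b = h (a \<otimes>\<^bsub>G\<^esub> b)"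
proof -
  have i: "inj_on h (carrier G)" using assms(1) by (meson inj_on_subset subset_UNIV)
  show ?thesis using assms(2,3) by (simp add: transport_def the_inv_into_f_f[OF i])
qed

lemma transport_group:
  assumes h: "inj h" and G: "group G" shows "group (transport h G)"
proof -
  interpret G: group G by (rule G)
  show ?thesis
  proof (rule groupI)
    fix x y assume "x \<in> carrier (transport h G)" "y \<in> carrier (transport h G)"
    then show "x \<otimes>\<^bsub>transport h G\<^esub> y \<in> carrier (transport h G)"
      by (auto simp: transport_carrier transport_mult[OF h])
  next
    show "\<one>\<^bsub>transport h G\<^esub> \<in> carrier (transport h G)"
      by (simp add: transport_carrier transport_one)
  next
    fix x y z assume "x \<in> carrier (transport h G)" "y \<in> carrier (transport h G)" "z \<in> carrier (transport h G)"
    then show "x \<otimes>\<^bsub>transport h G\<^esub> y \<otimes>\<^bsub>transport h G\<^esub> z =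
           x \<otimes>\<^bsub>transport h G\<^esub> (y \<otimes>\<^bsub>transport h G\<^esub> z)"
      by (auto simp: transport_carrier transport_mult[OF h] G.m_assoc)
  next
    fix x assume "x \<in> carrier (transport h G)"
    then show "\<one>\<^bsub>transport h G\<^esub> \<otimes>\<^bsub>transport h G\<^esub> x = x"
      by (auto simp: transport_carrier transport_one transport_mult[OF h])
  next
    fix x assume "x \<in> carrier (transport h G)"
    then obtain a where a: "a \<in> carrier G" "x = h a" by (auto simp: transport_carrier)
    show "\<exists>y\<in>carrier (transport h G). y \<otimes>\<^bsub>transport h G\<^esub> x = \<one>\<^bsub>transport h G\<^esub>"
      by (rule bexI[of _ "h (inv\<^bsub>G\<^esub> a)"])
         (use a in \<open>auto simp: transport_carrier transport_one transport_mult[OF h]\<close>)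
  qed
qed

lemma transport_comm_group:
  assumes h: "inj h" and G: "comm_group G" shows "comm_group (transport h G)"
proof -
  interpret G: comm_group G by (rule G)
  interpret T: group "transport h G" by (rule transport_group[OF h G.is_group])
  show ?thesis
    by (rule T.group_comm_groupI)
       (auto simp: transport_carrier transport_mult[OF h] G.m_comm)
qed

lemma transport_hom_out:
  assumes h: "inj h" and G: "group G" and phi: "\<phi> \<in> hom G K" and eq: "\<And>a. a \<in> carrier G \<Longrightarrow> f (h a) = \<phi> a"
  shows "f \<in> hom (transport h G) K"
proof (rule homI)
  fix x assume "x \<in> carrier (transport h G)"
  then show "f x \<in> carrier K" using phi eq by (auto simp: transport_carrier hom_def)
next
  fix x y assume "x \<in> carrier (transport h G)" "y \<in> carrier (transport h G)"
  then obtain a b where ab: "a \<in> carrier G" "b \<in> carrier G" "x = h a" "y = h b"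
    by (auto simp: transport_carrier)
  have "a \<otimes>\<^bsub>G\<^esub> b \<in> carrier G" using ab G by (simp add: group.is_monoid monoid.m_closed)
  then show "f (x \<otimes>\<^bsub>transport h G\<^esub> y) = f x \<otimes>\<^bsub>K\<^esub> f y"
    using phi eq ab by (simp add: transport_mult[OF h] hom_mult)
qed

lemma transport_hom_in:
  assumes h: "inj h" shows "h \<in> hom G (transport h G)"
  by (rule homI) (auto simp: transport_carrier transport_mult[OF h])

lemma transport_hom:
  assumes h: "inj h" and h': "inj h'" and G: "group G" and phi: "\<phi> \<in> hom G H"
    and eq: "\<And>a. a \<in> carrier G \<Longrightarrow> f (h a) = h' (\<phi> a)"
  shows "f \<in> hom (transport h G) (transport h' H)"
proof (rule transport_hom_out[where \<phi>="\<lambda>a. h' (\<phi> a)", OF h G _ eq])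
  show "(\<lambda>a. h' (\<phi> a)) \<in> hom G (transport h' H)"
  proof -
    have "(\<lambda>a. h' (\<phi> a)) = h' \<circ> \<phi>" by (rule ext) simp
    then show ?thesis using hom_compose[OF phi transport_hom_in[OF h', of H]] by (simp only:)
  qed
qed

lemma transport_hom_comp:
  assumes h: "inj h" and f: "f \<in> hom (transport h G) K"
  shows "(\<lambda>a. f (h a)) \<in> hom G K"
proof -
  have "(\<lambda>a. f (h a)) = f \<circ> h" by (rule ext) simp
  then show ?thesis using hom_compose[OF transport_hom_in[OF h, of G] f] by (simp only:)
qed

subsection \<open>Quotients\<close>

lemma quot_val:
  assumes G: "group G" and N: "subgroup N G" and H: "group H" and f: "f \<in> hom G H"
    and ker: "\<And>n. n \<in> N \<Longrightarrow> f n = \<one>\<^bsub>H\<^esub>" and a: "a \<in> carrier G"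
  shows "f (SOME x. x \<in> N #>\<^bsub>G\<^esub> a) = f a"
proof -
  interpret G: group G by (rule G)
  interpret H: group H by (rule H)
  have "a \<in> N #>\<^bsub>G\<^esub> a" by (rule G.rcos_self[OF a N])
  then have "(SOME x. x \<in> N #>\<^bsub>G\<^esub> a) \<in> N #>\<^bsub>G\<^esub> a" by (rule someI)
  then obtain n where n: "n \<in> N" "(SOME x. x \<in> N #>\<^bsub>G\<^esub> a) = n \<otimes>\<^bsub>G\<^esub> a"
    by (auto simp: r_coset_def)
  have nc: "n \<in> carrier G" using n(1) N by (meson subgroup.mem_carrier)
  show ?thesis using n nc a f ker hom_carrier'[OF f a] by (simp add: hom_mult)
qed

lemma quot_hom:
  assumes G: "group G" and N: "N \<lhd> G" and H: "group H" and f: "f \<in> hom G H"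
    and ker: "\<And>n. n \<in> N \<Longrightarrow> f n = \<one>\<^bsub>H\<^esub>"
  shows "(\<lambda>X. f (SOME x. x \<in> X)) \<in> hom (G Mod N) H"
proof -
  interpret N: normal N G by (rule N)
  have Ns: "subgroup N G" by (rule N.subgroup_axioms)
  show ?thesis
  proof (rule homI)
    fix X assume "X \<in> carrier (G Mod N)"
    then obtain a where a: "a \<in> carrier G" "X = N #>\<^bsub>G\<^esub> a" by (auto simp: carrier_FactGroup)
    show "f (SOME x. x \<in> X) \<in> carrier H"
      using quot_val[OF G Ns H f ker a(1)] a hom_carrier'[OF f] by simp
  next
    fix X Y assume "X \<in> carrier (G Mod N)" "Y \<in> carrier (G Mod N)"
    then obtain a b where a: "a \<in> carrier G" "X = N #>\<^bsub>G\<^esub> a" and b: "b \<in> carrier G" "Y = N #>\<^bsub>G\<^esub> b"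
      by (auto simp: carrier_FactGroup)
    have "X \<otimes>\<^bsub>G Mod N\<^esub> Y = N #>\<^bsub>G\<^esub> (a \<otimes>\<^bsub>G\<^esub> b)"
      using a b by (simp add: N.rcos_sum)
    then show "f (SOME x. x \<in> X \<otimes>\<^bsub>G Mod N\<^esub> Y) = f (SOME x. x \<in> X) \<otimes>\<^bsub>H\<^esub> f (SOME x. x \<in> Y)"
      using quot_val[OF G Ns H f ker] a b f by (simp add: hom_mult)
  qed
qed

lemma rcos_eqI:
  assumes G: "group G" and N: "subgroup N G" and a: "a \<in> carrier G" and b: "b \<in> carrier G"
    and ab: "a \<otimes>\<^bsub>G\<^esub> inv\<^bsub>G\<^esub> b \<in> N"
  shows "N #>\<^bsub>G\<^esub> a = N #>\<^bsub>G\<^esub> b"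
proof -
  interpret G: group G by (rule G)
  have "a \<in> N #>\<^bsub>G\<^esub> b" using subgroup.rcos_module_rev[OF N G b a ab] .
  then show ?thesis using G.repr_independence[OF _ b N] by simp
qed

lemma comm_quot:
  assumes G: "group G" and N: "subgroup N G"
    and cm: "\<And>x y. x \<in> carrier G \<Longrightarrow> y \<in> carrier G \<Longrightarrow>
          x \<otimes>\<^bsub>G\<^esub> y \<otimes>\<^bsub>G\<^esub> inv\<^bsub>G\<^esub> x \<otimes>\<^bsub>G\<^esub> inv\<^bsub>G\<^esub> y \<in> N"
  shows "N \<lhd> G" "comm_group (G Mod N)"
proof -
  interpret G: group G by (rule G)
  have Nc: "\<And>h. h \<in> N \<Longrightarrow> h \<in> carrier G" using N by (meson subgroup.mem_carrier)
  show nor: "N \<lhd> G"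
  proof (rule G.normal_invI[OF N])
    fix x h assume x: "x \<in> carrier G" and h: "h \<in> N"
    have hc: "h \<in> carrier G" using Nc h .
    have "x \<otimes>\<^bsub>G\<^esub> h \<otimes>\<^bsub>G\<^esub> inv\<^bsub>G\<^esub> x = (x \<otimes>\<^bsub>G\<^esub> h \<otimes>\<^bsub>G\<^esub> inv\<^bsub>G\<^esub> x \<otimes>\<^bsub>G\<^esub> inv\<^bsub>G\<^esub> h) \<otimes>\<^bsub>G\<^esub> h"
      using x hc by (simp add: G.m_assoc)
    also have "\<dots> \<in> N" using cm[OF x hc] h N by (meson subgroup.m_closed)
    finally show "x \<otimes>\<^bsub>G\<^esub> h \<otimes>\<^bsub>G\<^esub> inv\<^bsub>G\<^esub> x \<in> N" .
  qed
  interpret Nn: normal N G by (rule nor)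
  interpret Q: group "G Mod N" by (rule Nn.factorgroup_is_group)
  show "comm_group (G Mod N)"
  proof (rule Q.group_comm_groupI)
    fix X Y assume "X \<in> carrier (G Mod N)" "Y \<in> carrier (G Mod N)"
    then obtain a b where a: "a \<in> carrier G" "X = N #>\<^bsub>G\<^esub> a" and b: "b \<in> carrier G" "Y = N #>\<^bsub>G\<^esub> b"
      by (auto simp: carrier_FactGroup)
    have "N #>\<^bsub>G\<^esub> (a \<otimes>\<^bsub>G\<^esub> b) = N #>\<^bsub>G\<^esub> (b \<otimes>\<^bsub>G\<^esub> a)"
    proof (rule rcos_eqI[OF G N])
      show "a \<otimes>\<^bsub>G\<^esub> b \<otimes>\<^bsub>G\<^esub> inv\<^bsub>G\<^esub> (b \<otimes>\<^bsub>G\<^esub> a) \<in> N"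
        using cm[OF a(1) b(1)] a b by (simp add: G.inv_mult_group G.m_assoc)
    qed (use a b in auto)
    then show "X \<otimes>\<^bsub>G Mod N\<^esub> Y = Y \<otimes>\<^bsub>G Mod N\<^esub> X"
      using a b by (simp add: Nn.rcos_sum)
  qed
qed

subsection \<open>Generated subgroups and homomorphisms\<close>

lemma hom_generate_into:
  assumes G: "group G" and H: "group H" and f: "f \<in> hom G H" and S: "S \<subseteq> carrier G"
    and K: "subgroup K H" and fS: "\<And>s. s \<in> S \<Longrightarrow> f s \<in> K" and x: "x \<in> generate G S"
  shows "f x \<in> K"
  using x
proof (induction rule: generate.induct)
  case one
  then show ?case using hom_one'[OF G H f] K by (simp add: subgroup.one_closed)
next
  case (incl h)
  then show ?case using fS by simp
next
  case (inv h)
  have hc: "h \<in> carrier G" using inv S by auto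
  show ?case using hom_inv'[OF G H f hc] subgroup.m_inv_closed[OF K fS[OF inv]] by simp
next
  case (eng h1 h2)
  have "h1 \<in> carrier G" "h2 \<in> carrier G"
    using eng.hyps group.generate_in_carrier[OF G S] by auto
  then show ?case using eng.IH f K by (simp add: hom_mult subgroup.m_closed)
qed

lemma hom_generate_kernel:
  assumes G: "group G" and H: "group H" and f: "f \<in> hom G H" and S: "S \<subseteq> carrier G"
    and fS: "\<And>s. s \<in> S \<Longrightarrow> f s = \<one>\<^bsub>H\<^esub>" and x: "x \<in> generate G S"
  shows "f x = \<one>\<^bsub>H\<^esub>"
  using hom_generate_into[OF G H f S group.triv_subgroup[OF H] _ x] fS by auto

lemma equalizer_subgroup:
  assumes G: "group G" and H: "group H" and f: "f \<in> hom G H" and g: "g \<in> hom G H"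
  shows "subgroup {x \<in> carrier G. f x = g x} G"
proof -
  interpret G: group G by (rule G)
  show ?thesis
  proof (rule G.subgroupI)
    show "{x \<in> carrier G. f x = g x} \<noteq> {}"
      using hom_one'[OF G H f] hom_one'[OF G H g] by auto
  next
    fix a assume "a \<in> {x \<in> carrier G. f x = g x}"
    then show "inv\<^bsub>G\<^esub> a \<in> {x \<in> carrier G. f x = g x}"
      using hom_inv'[OF G H f] hom_inv'[OF G H g] by auto
  next
    fix a b assume "a \<in> {x \<in> carrier G. f x = g x}" "b \<in> {x \<in> carrier G. f x = g x}"
    then show "a \<otimes>\<^bsub>G\<^esub> b \<in> {x \<in> carrier G. f x = g x}"
      using f g by (auto simp: hom_mult)
  qed auto
qed


lemma free_hom_unique:
  assumes H: "group H" and f: "f \<in> hom (free_Abelian_group S) H" and g: "g \<in> hom (free_Abelian_group S) H"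
    and eq: "\<And>s. s \<in> S \<Longrightarrow> f (frag_of s) = g (frag_of s)"
    and x: "x \<in> carrier (free_Abelian_group S)"
  shows "f x = g x"
proof -
  let ?E = "{x \<in> carrier (free_Abelian_group S). f x = g x}"
  have E: "subgroup ?E (free_Abelian_group S)"
    by (rule equalizer_subgroup[OF group_free_Abelian_group H f g])
  have kx: "Poly_Mapping.keys x \<subseteq> S" using x by simp
  have "x \<in> ?E"
  proof (rule free_Abelian_group_induct[of x S "\<lambda>x. x \<in> ?E", OF kx])
    show "0 \<in> ?E" using subgroup.one_closed[OF E] by simp
  next
    fix x y assume xy: "x \<in> ?E" "y \<in> ?E"
    have "x \<otimes>\<^bsub>free_Abelian_group S\<^esub> inv\<^bsub>free_Abelian_group S\<^esub> y \<in> ?E"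
      by (rule subgroup.m_closed[OF E xy(1) subgroup.m_inv_closed[OF E xy(2)]])
    moreover have "x \<otimes>\<^bsub>free_Abelian_group S\<^esub> inv\<^bsub>free_Abelian_group S\<^esub> y = x - y"
      using xy by simp
    ultimately show "x - y \<in> ?E" by simp
  next
    fix a assume "a \<in> S" then show "frag_of a \<in> ?E" using eq by simp
  qed
  then show ?thesis by simp
qed

definition injS :: "'i set \<Rightarrow> ('i \<Rightarrow> ('b, 'c) monoid_scheme) \<Rightarrow> 'i \<Rightarrow> 'b \<Rightarrow> ('i \<Rightarrow> 'b)" where
  "injS I G i a = (\<lambda>p\<in>I. if p = i then a else \<one>\<^bsub>G p\<^esub>)"

lemma inj_c_eq: "inj_c n C c x = injS (obj C) (cgrp C n) c x"
  by (simp add: inj_c_def injS_def)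

lemma injS_carrier:
  assumes grp: "\<And>i. i \<in> I \<Longrightarrow> group (G i)" and i: "i \<in> I" and a: "a \<in> carrier (G i)"
  shows "injS I G i a \<in> carrier (sum_group I G)"
proof -
  have "{p \<in> I. injS I G i a p \<noteq> \<one>\<^bsub>G p\<^esub>} \<subseteq> {i}" by (auto simp: injS_def)
  then have "finite {p \<in> I. injS I G i a p \<noteq> \<one>\<^bsub>G p\<^esub>}" by (rule finite_subset) simp
  moreover have "injS I G i a \<in> (\<Pi>\<^sub>E p\<in>I. carrier (G p))"
    using a grp by (auto simp: injS_def group.is_monoid monoid.one_closed)
  ultimately show ?thesis by (simp add: carrier_sum_group[of I G, OF grp])
qed

lemma injS_mult:
  assumes grp: "\<And>i. i \<in> I \<Longrightarrow> group (G i)" and i: "i \<in> I"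
    and a: "a \<in> carrier (G i)" and b: "b \<in> carrier (G i)"
  shows "injS I G i a \<otimes>\<^bsub>sum_group I G\<^esub> injS I G i b = injS I G i (a \<otimes>\<^bsub>G i\<^esub> b)"
  using grp by (auto simp: injS_def fun_eq_iff group.is_monoid monoid.one_closed)

lemma injS_hom:
  assumes grp: "\<And>i. i \<in> I \<Longrightarrow> group (G i)" and i: "i \<in> I"
  shows "injS I G i \<in> hom (G i) (sum_group I G)"
proof (rule homI)
  fix x assume "x \<in> carrier (G i)"
  then show "injS I G i x \<in> carrier (sum_group I G)" using injS_carrier[of I G, OF grp i] by blast
next
  fix x y assume "x \<in> carrier (G i)" "y \<in> carrier (G i)"
  then show "injS I G i (x \<otimes>\<^bsub>G i\<^esub> y) = injS I G i x \<otimes>\<^bsub>sum_group I G\<^esub> injS I G i y"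
    using injS_mult[of I G, OF grp i] by (simp del: mult_sum_group)
qed

lemma injS_one:
  assumes grp: "\<And>i. i \<in> I \<Longrightarrow> group (G i)" and i: "i \<in> I"
  shows "injS I G i \<one>\<^bsub>G i\<^esub> = \<one>\<^bsub>sum_group I G\<^esub>"
  by (auto simp: injS_def)

lemma injS_inv:
  assumes grp: "\<And>i. i \<in> I \<Longrightarrow> group (G i)" and i: "i \<in> I" and a: "a \<in> carrier (G i)"
  shows "inv\<^bsub>sum_group I G\<^esub> (injS I G i a) = injS I G i (inv\<^bsub>G i\<^esub> a)"
  using hom_inv'[OF grp[OF i] sum_group[of I G, OF grp] injS_hom[of I G, OF grp i] a] by simp


lemma sum_group_in_subgroup:
  assumes grp: "\<And>i. i \<in> I \<Longrightarrow> group (G i)" and K: "subgroup K (sum_group I G)"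
    and x: "x \<in> carrier (sum_group I G)"
    and xi: "\<And>i. i \<in> I \<Longrightarrow> injS I G i (x i) \<in> K"
  shows "x \<in> K"
proof -
  have onec: "\<And>p. p \<in> I \<Longrightarrow> \<one>\<^bsub>G p\<^esub> \<in> carrier (G p)"
    using grp by (meson group.is_monoid monoid.one_closed)
  have main: "finite F \<Longrightarrow> \<forall>x\<in>carrier (sum_group I G). {i \<in> I. x i \<noteq> \<one>\<^bsub>G i\<^esub>} \<subseteq> F \<longrightarrow>
      (\<forall>i\<in>I. injS I G i (x i) \<in> K) \<longrightarrow> x \<in> K" for F
  proof (induction F rule: finite_induct)
    case empty
    show ?case
    proof (intro ballI impI)
      fix x assume x: "x \<in> carrier (sum_group I G)" and s: "{i \<in> I. x i \<noteq> \<one>\<^bsub>G i\<^esub>} \<subseteq> {}"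
      have "x = \<one>\<^bsub>sum_group I G\<^esub>"
        using x s by (auto simp: carrier_sum_group[of I G, OF grp] fun_eq_iff PiE_def extensional_def)
      then show "x \<in> K" using K subgroup.one_closed by metis
    qed
  next
    case (insert a F)
    show ?case
    proof (intro ballI impI)
      fix x assume x: "x \<in> carrier (sum_group I G)" and s: "{i \<in> I. x i \<noteq> \<one>\<^bsub>G i\<^esub>} \<subseteq> insert a F"
        and xi: "\<forall>i\<in>I. injS I G i (x i) \<in> K"
      have xPi: "x \<in> (\<Pi>\<^sub>E p\<in>I. carrier (G p))" and xfin: "finite {i \<in> I. x i \<noteq> \<one>\<^bsub>G i\<^esub>}"
        using x by (auto simp: carrier_sum_group[of I G, OF grp])
      show "x \<in> K"
      proof (cases "a \<in> I \<and> x a \<noteq> \<one>\<^bsub>G a\<^esub>")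
        case False
        then have "{i \<in> I. x i \<noteq> \<one>\<^bsub>G i\<^esub>} \<subseteq> F" using s by auto
        then show ?thesis using insert.IH x xi by blast
      next
        case True
        define x' where "x' = (\<lambda>i\<in>I. if i = a then \<one>\<^bsub>G i\<^esub> else x i)"
        have x'Pi: "x' \<in> (\<Pi>\<^sub>E p\<in>I. carrier (G p))"
        proof -
          have "x' p \<in> carrier (G p)" if p: "p \<in> I" for p
          proof -
            interpret Gp: group "G p" by (rule grp[OF p])
            show ?thesis using xPi p onec by (auto simp: x'_def)
          qed
          then show ?thesis by (simp add: x'_def restrict_PiE_iff)
        qed
        have x's: "{i \<in> I. x' i \<noteq> \<one>\<^bsub>G i\<^esub>} \<subseteq> {i \<in> I. x i \<noteq> \<one>\<^bsub>G i\<^esub>}"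
          by (auto simp: x'_def)
        have x'c: "x' \<in> carrier (sum_group I G)"
          using x'Pi finite_subset[OF x's xfin] by (simp add: carrier_sum_group[of I G, OF grp])
        have x'F: "{i \<in> I. x' i \<noteq> \<one>\<^bsub>G i\<^esub>} \<subseteq> F"
          using s by (auto simp: x'_def)
        have x'i: "\<forall>i\<in>I. injS I G i (x' i) \<in> K"
        proof
          fix i assume i: "i \<in> I"
          show "injS I G i (x' i) \<in> K"
          proof (cases "i = a")
            case True
            then show ?thesis using i injS_one[of I G, OF grp i] subgroup.one_closed[OF K]
              by (simp add: x'_def)
          next
            case False
            then show ?thesis using i xi by (simp add: x'_def)
          qed
        qed
        have x'K: "x' \<in> K" using insert.IH x'c x'F x'i by blast
        have aK: "injS I G a (x a) \<in> K" using xi True by blast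
        have "x = injS I G a (x a) \<otimes>\<^bsub>sum_group I G\<^esub> x'"
        proof (rule ext)
          fix p show "x p = (injS I G a (x a) \<otimes>\<^bsub>sum_group I G\<^esub> x') p"
          proof (cases "p \<in> I")
            case True
            interpret Gp: group "G p" by (rule grp[OF True])
            have xp: "x p \<in> carrier (G p)" using xPi True by auto
            have "x p \<otimes>\<^bsub>G p\<^esub> \<one>\<^bsub>G p\<^esub> = x p" "\<one>\<^bsub>G p\<^esub> \<otimes>\<^bsub>G p\<^esub> x p = x p" using xp by simp_all
            then show ?thesis using True xp by (cases "p = a") (simp_all add: injS_def x'_def)
          next
            case False
            then show ?thesis using xPi by (auto simp: PiE_def extensional_def)
          qed
        qed
        then show "x \<in> K" using aK x'K K by (metis subgroup.m_closed)
      qed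
    qed
  qed
  have "finite {i \<in> I. x i \<noteq> \<one>\<^bsub>G i\<^esub>}" using x by (auto simp: carrier_sum_group[of I G, OF grp])
  then show ?thesis using main x xi by blast
qed

lemma sum_hom_unique:
  assumes grp: "\<And>i. i \<in> I \<Longrightarrow> group (G i)" and H: "group H"
    and f: "f \<in> hom (sum_group I G) H" and g: "g \<in> hom (sum_group I G) H"
    and eq: "\<And>i a. i \<in> I \<Longrightarrow> a \<in> carrier (G i) \<Longrightarrow> f (injS I G i a) = g (injS I G i a)"
    and x: "x \<in> carrier (sum_group I G)"
  shows "f x = g x"
proof -
  let ?E = "{x \<in> carrier (sum_group I G). f x = g x}"
  have E: "subgroup ?E (sum_group I G)"
    by (rule equalizer_subgroup[OF sum_group[of I G, OF grp] H f g])
  have "x \<in> ?E"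
  proof (rule sum_group_in_subgroup[OF grp E x])
    fix i assume i: "i \<in> I"
    have "x i \<in> carrier (G i)" using x i by (auto simp: carrier_sum_group[of I G, OF grp])
    then show "injS I G i (x i) \<in> ?E" using eq i injS_carrier[of I G, OF grp i] by auto
  qed
  then show ?thesis by simp
qed

lemma gfinprod_injS:
  assumes H: "comm_group H" and grp: "\<And>i. i \<in> I \<Longrightarrow> group (G i)" and i: "i \<in> I"
    and a: "a \<in> carrier (G i)" and f: "\<And>p. p \<in> I \<Longrightarrow> f p \<in> hom (G p) H"
  shows "gfinprod H (\<lambda>p. f p (injS I G i a p)) I = f i a"
proof -
  interpret H: comm_group H by (rule H)
  have one: "f p \<one>\<^bsub>G p\<^esub> = \<one>\<^bsub>H\<^esub>" if "p \<in> I" for p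
    using hom_one'[OF grp[OF that] H.is_group f[OF that]] .
  have fa: "f i a \<in> carrier H" using hom_carrier'[OF f[OF i] a] .
  have car: "(\<lambda>p. f p (injS I G i a p)) \<in> I \<rightarrow> carrier H"
    using fa one by (auto simp: injS_def)
  have "gfinprod H (\<lambda>p. f p (injS I G i a p)) I = gfinprod H (\<lambda>p. f p (injS I G i a p)) {i}"
    by (rule H.gfinprod_mono_neutral_cong_right) (use i one car in \<open>auto simp: injS_def\<close>)
  also have "\<dots> = finprod H (\<lambda>p. f p (injS I G i a p)) {i}"
    using car i by (intro H.gfinprod_eq_finprod) auto
  also have "\<dots> = f i a"
    using fa i by (simp add: injS_def)
  finally show ?thesis .
qed

lemma hom_group_sum_injS:
  assumes H: "comm_group H" and grp: "\<And>i. i \<in> I \<Longrightarrow> group (G i)"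
    and f: "\<And>p. p \<in> I \<Longrightarrow> f p \<in> hom (G p) H"
  shows "(\<lambda>x. gfinprod H (\<lambda>p. f p (x p)) I) \<in> hom (sum_group I G) H"
  by (rule comm_group.hom_group_sum[where G=H and I=I and f=f and A=G, OF H f grp])


lemma chain_facts:
  assumes A: "chain_complex A"
  shows "comm_group (cgr A n)" "dif A n \<in> hom (cgr A (Suc n)) (cgr A n)"
    "\<And>x. x \<in> carrier (cgr A (Suc (Suc n))) \<Longrightarrow> dif A n (dif A (Suc n) x) = \<one>\<^bsub>cgr A n\<^esub>"
  using A by (auto simp: chain_complex_def)

lemma U_Cr_simps:
  "obj (U_Cr A) = carrier (cgr A 0)"
  "arr (U_Cr A) = carrier (cgr A 0) \<times> carrier (cgr A 1)"
  "src (U_Cr A) = fst"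
  "tgt (U_Cr A) (a, l) = a \<otimes>\<^bsub>cgr A 0\<^esub> dif A 0 l"
  "comp (U_Cr A) (b, m) (a, l) = (a, l \<otimes>\<^bsub>cgr A 1\<^esub> m)"
  "ident (U_Cr A) a = (a, \<one>\<^bsub>cgr A 1\<^esub>)"
  "cgrp (U_Cr A) n c = cgr A n"
  "act (U_Cr A) n p x = x"
  "bd1 (U_Cr A) c x = (c, dif A 1 x)"
  "bd (U_Cr A) n c = dif A n"
  by (simp_all add: U_Cr_def)

lemma U_Cr_crossed:
  assumes A: "chain_complex A" shows "crossed_complex (U_Cr A)"
proof -
  have cg: "\<And>n. comm_group (cgr A n)" using chain_facts[OF A] by blast
  interpret A0: comm_group "cgr A 0" by (rule cg)
  interpret A1: comm_group "cgr A (Suc 0)" by (rule cg)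
  interpret A2: comm_group "cgr A 2" by (rule cg)
  have h0: "dif A 0 \<in> hom (cgr A (Suc 0)) (cgr A 0)" using chain_facts(2)[OF A, of 0] by simp
  have h1: "dif A (Suc 0) \<in> hom (cgr A 2) (cgr A (Suc 0))" using chain_facts(2)[OF A, of 1] by (simp add: numeral_2_eq_2)
  have dd0: "\<And>x. x \<in> carrier (cgr A 2) \<Longrightarrow> dif A 0 (dif A (Suc 0) x) = \<one>\<^bsub>cgr A 0\<^esub>"
    using chain_facts(3)[OF A, of _ 0] by (simp add: numeral_2_eq_2)
  have dd1: "\<And>x. x \<in> carrier (cgr A 3) \<Longrightarrow> dif A (Suc 0) (dif A 2 x) = \<one>\<^bsub>cgr A (Suc 0)\<^esub>"
    using chain_facts(3)[OF A, of _ 1] by (simp add: numeral_3_eq_3 numeral_2_eq_2)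
  have d0c: "\<And>l. l \<in> carrier (cgr A (Suc 0)) \<Longrightarrow> dif A 0 l \<in> carrier (cgr A 0)" by (rule hom_carrier'[OF h0])
  have d0m: "\<And>l m. l \<in> carrier (cgr A (Suc 0)) \<Longrightarrow> m \<in> carrier (cgr A (Suc 0)) \<Longrightarrow>
      dif A 0 (l \<otimes>\<^bsub>cgr A (Suc 0)\<^esub> m) = dif A 0 l \<otimes>\<^bsub>cgr A 0\<^esub> dif A 0 m" by (rule hom_mult'[OF h0])
  have d01: "dif A 0 \<one>\<^bsub>cgr A (Suc 0)\<^esub> = \<one>\<^bsub>cgr A 0\<^esub>" using hom_one'[OF A1.is_group A0.is_group h0] .
  have d0i: "\<And>l. l \<in> carrier (cgr A (Suc 0)) \<Longrightarrow> dif A 0 (inv\<^bsub>cgr A (Suc 0)\<^esub> l) = inv\<^bsub>cgr A 0\<^esub> dif A 0 l"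
    using hom_inv'[OF A1.is_group A0.is_group h0] .
  have d1c: "\<And>l. l \<in> carrier (cgr A 2) \<Longrightarrow> dif A (Suc 0) l \<in> carrier (cgr A (Suc 0))" by (rule hom_carrier'[OF h1])
  have d1m: "\<And>l m. l \<in> carrier (cgr A 2) \<Longrightarrow> m \<in> carrier (cgr A 2) \<Longrightarrow>
      dif A (Suc 0) (l \<otimes>\<^bsub>cgr A 2\<^esub> m) = dif A (Suc 0) l \<otimes>\<^bsub>cgr A (Suc 0)\<^esub> dif A (Suc 0) m" by (rule hom_mult'[OF h1])
  have inv_ex: "\<forall>f\<in>arr (U_Cr A). \<exists>g\<in>arr (U_Cr A). src (U_Cr A) g = tgt (U_Cr A) f \<and> tgt (U_Cr A) g = src (U_Cr A) f \<and>
        comp (U_Cr A) g f = ident (U_Cr A) (src (U_Cr A) f) \<and> comp (U_Cr A) f g = ident (U_Cr A) (tgt (U_Cr A) f)"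
  proof
    fix f assume f: "f \<in> arr (U_Cr A)"
    then obtain a l where al: "f = (a, l)" "a \<in> carrier (cgr A 0)" "l \<in> carrier (cgr A (Suc 0))" by (auto simp: U_Cr_simps)
    show "\<exists>g\<in>arr (U_Cr A). src (U_Cr A) g = tgt (U_Cr A) f \<and> tgt (U_Cr A) g = src (U_Cr A) f \<and>
        comp (U_Cr A) g f = ident (U_Cr A) (src (U_Cr A) f) \<and> comp (U_Cr A) f g = ident (U_Cr A) (tgt (U_Cr A) f)"
      by (rule bexI[of _ "(a \<otimes>\<^bsub>cgr A 0\<^esub> dif A 0 l, inv\<^bsub>cgr A (Suc 0)\<^esub> l)"])
         (use al in \<open>auto simp: U_Cr_simps d0c d0i A0.m_assoc\<close>)
  qed
  have grpd: "groupoid (U_Cr A)"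
    unfolding groupoid_def
    apply (intro conjI)
    subgoal by (auto simp: U_Cr_simps d0c)
    subgoal by (auto simp: U_Cr_simps d01)
    subgoal by (auto simp: U_Cr_simps d0m d0c A0.m_assoc)
    subgoal by (auto simp: U_Cr_simps A1.m_assoc)
    subgoal by (auto simp: U_Cr_simps)
    subgoal by (rule inv_ex)
    done
  have conj: "\<And>a b. a \<in> carrier (cgr A 2) \<Longrightarrow> b \<in> carrier (cgr A 2) \<Longrightarrow>
      b = a \<otimes>\<^bsub>cgr A 2\<^esub> b \<otimes>\<^bsub>cgr A 2\<^esub> inv\<^bsub>cgr A 2\<^esub> a"
  proof -
    fix a b assume ab: "a \<in> carrier (cgr A 2)" "b \<in> carrier (cgr A 2)"
    have "a \<otimes>\<^bsub>cgr A 2\<^esub> b \<otimes>\<^bsub>cgr A 2\<^esub> inv\<^bsub>cgr A 2\<^esub> a = b \<otimes>\<^bsub>cgr A 2\<^esub> (a \<otimes>\<^bsub>cgr A 2\<^esub> inv\<^bsub>cgr A 2\<^esub> a)"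
      using ab by (simp add: A2.m_comm[of a b] A2.m_assoc)
    then show "b = a \<otimes>\<^bsub>cgr A 2\<^esub> b \<otimes>\<^bsub>cgr A 2\<^esub> inv\<^bsub>cgr A 2\<^esub> a" using ab by simp
  qed
  show ?thesis
    unfolding crossed_complex_def
  proof (intro conjI grpd allI ballI impI)
    fix n :: nat and c assume "2 \<le> n" then show "group (cgrp (U_Cr A) n c)" using cg by (simp add: U_Cr_simps comm_group.axioms(2))
  next
    fix n :: nat and c assume "2 < n" then show "comm_group (cgrp (U_Cr A) n c)" using cg by (simp add: U_Cr_simps)
  next
    fix n :: nat and l assume "2 \<le> n" "l \<in> arr (U_Cr A)"
    then show "act (U_Cr A) n l \<in> hom (cgrp (U_Cr A) n (src (U_Cr A) l)) (cgrp (U_Cr A) n (tgt (U_Cr A) l))"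
      by (auto simp: U_Cr_simps hom_def)
  qed (auto simp: U_Cr_simps d1c d0c dd0 dd1 d1m A1.m_comm conj A0.r_one chain_facts[OF A] A1.m_assoc)
qed

lemma U_mor_morphism:
  assumes A: "chain_complex A" and B: "chain_complex B" and g: "chain_map A B g"
  shows "cr_morphism (U_Cr A) (U_Cr B) (U_mor g)"
proof -
  have cgA: "\<And>n. comm_group (cgr A n)" using chain_facts[OF A] by blast
  have cgB: "\<And>n. comm_group (cgr B n)" using chain_facts[OF B] by blast
  have gh: "\<And>n. g n \<in> hom (cgr A n) (cgr B n)" and
    gd: "\<And>n x. x \<in> carrier (cgr A (Suc n)) \<Longrightarrow> g n (dif A n x) = dif B n (g (Suc n) x)"
    using g by (auto simp: chain_map_def)
  have gc: "\<And>n x. x \<in> carrier (cgr A n) \<Longrightarrow> g n x \<in> carrier (cgr B n)"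
    using gh by (rule hom_carrier')
  have gm: "\<And>n x y. x \<in> carrier (cgr A n) \<Longrightarrow> y \<in> carrier (cgr A n) \<Longrightarrow>
     g n (x \<otimes>\<^bsub>cgr A n\<^esub> y) = g n x \<otimes>\<^bsub>cgr B n\<^esub> g n y"
    using gh by (rule hom_mult')
  have g1: "\<And>n. g n \<one>\<^bsub>cgr A n\<^esub> = \<one>\<^bsub>cgr B n\<^esub>"
    using gh cgA cgB by (meson comm_group.axioms(2) hom_one')
  have dAc: "\<And>n x. x \<in> carrier (cgr A (Suc n)) \<Longrightarrow> dif A n x \<in> carrier (cgr A n)"
    using chain_facts(2)[OF A] by (rule hom_carrier')
  have U_mor_simps: "mo (U_mor g) = g 0" "mm (U_mor g) (a, l) = (g 0 a, g 1 l)" "me (U_mor g) n c = g n" for a l n c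
    by (simp_all add: U_mor_def)
  show ?thesis
    unfolding cr_morphism_def
    apply (intro conjI)
    subgoal by (auto simp: U_Cr_simps U_mor_simps gc)
    subgoal by (auto simp: U_Cr_simps U_mor_simps gc gm dAc gd[symmetric])
    subgoal by (auto simp: U_Cr_simps U_mor_simps gm)
    subgoal by (auto simp: U_Cr_simps U_mor_simps g1)
    subgoal by (auto simp: U_Cr_simps U_mor_simps gh)
    subgoal by (auto simp: U_Cr_simps U_mor_simps)
    subgoal by (auto simp: U_Cr_simps U_mor_simps gd numeral_2_eq_2)
    subgoal by (auto simp: U_Cr_simps U_mor_simps gd)
    done
qed


lemma hom_cong:
  assumes G: "group G" and f: "f \<in> hom G H" and eq: "\<And>x. x \<in> carrier G \<Longrightarrow> g x = f x" shows "g \<in> hom G H"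
proof (rule homI)
  fix x assume "x \<in> carrier G" then show "g x \<in> carrier H" using f eq by (simp add: hom_carrier')
next
  fix x y assume xy: "x \<in> carrier G" "y \<in> carrier G"
  then have "x \<otimes>\<^bsub>G\<^esub> y \<in> carrier G" using G by (simp add: group.is_monoid monoid.m_closed)
  then show "g (x \<otimes>\<^bsub>G\<^esub> y) = g x \<otimes>\<^bsub>H\<^esub> g y" using xy f eq by (simp add: hom_mult)
qed

lemma const_one_hom:
  assumes "monoid H" "monoid G" shows "(\<lambda>x. \<one>\<^bsub>H\<^esub>) \<in> hom G H"
  using assms by (auto simp: hom_def monoid.one_closed)

locale xc =
  fixes C :: "('o, 'm, 'e) crossed_cx"
  assumes cc: "crossed_complex C"
begin

lemma grpd: "groupoid C" using cc by (simp add: crossed_complex_def)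

lemma st_obj: "l \<in> arr C \<Longrightarrow> src C l \<in> obj C" "l \<in> arr C \<Longrightarrow> tgt C l \<in> obj C"
  using grpd by (auto simp: groupoid_def)

lemma ident_props: "c \<in> obj C \<Longrightarrow> ident C c \<in> arr C"
  "c \<in> obj C \<Longrightarrow> src C (ident C c) = c" "c \<in> obj C \<Longrightarrow> tgt C (ident C c) = c"
  using grpd by (auto simp: groupoid_def)

lemma comp_props:
  assumes "f \<in> arr C" "g \<in> arr C" "tgt C f = src C g"
  shows "comp C g f \<in> arr C" "src C (comp C g f) = src C f" "tgt C (comp C g f) = tgt C g"
  using grpd assms by (auto simp: groupoid_def)

lemma comp_ident: "f \<in> arr C \<Longrightarrow> comp C (ident C (tgt C f)) f = f"
  "f \<in> arr C \<Longrightarrow> comp C f (ident C (src C f)) = f"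
  using grpd by (auto simp: groupoid_def)

lemma grp: "2 \<le> n \<Longrightarrow> c \<in> obj C \<Longrightarrow> group (cgrp C n c)"
  using cc by (simp add: crossed_complex_def)

lemma cgrp_comm: "2 < n \<Longrightarrow> c \<in> obj C \<Longrightarrow> comm_group (cgrp C n c)"
  using cc by (simp add: crossed_complex_def)

lemma act_hom: "2 \<le> n \<Longrightarrow> l \<in> arr C \<Longrightarrow> act C n l \<in> hom (cgrp C n (src C l)) (cgrp C n (tgt C l))"
  using cc by (simp add: crossed_complex_def)

lemma bd1_props: "c \<in> obj C \<Longrightarrow> x \<in> carrier (cgrp C 2 c) \<Longrightarrow> bd1 C c x \<in> arr C"
  "c \<in> obj C \<Longrightarrow> x \<in> carrier (cgrp C 2 c) \<Longrightarrow> src C (bd1 C c x) = c"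
  "c \<in> obj C \<Longrightarrow> x \<in> carrier (cgrp C 2 c) \<Longrightarrow> tgt C (bd1 C c x) = c"
  using cc by (simp_all add: crossed_complex_def)

lemma bd1_mult: "c \<in> obj C \<Longrightarrow> x \<in> carrier (cgrp C 2 c) \<Longrightarrow> y \<in> carrier (cgrp C 2 c) \<Longrightarrow>
    bd1 C c (x \<otimes>\<^bsub>cgrp C 2 c\<^esub> y) = comp C (bd1 C c x) (bd1 C c y)"
  using cc by (simp add: crossed_complex_def)

lemma bd_hom: "2 \<le> n \<Longrightarrow> c \<in> obj C \<Longrightarrow> bd C n c \<in> hom (cgrp C (Suc n) c) (cgrp C n c)"
  using cc by (simp add: crossed_complex_def)

lemma bd1_act: "l \<in> arr C \<Longrightarrow> x \<in> carrier (cgrp C 2 (src C l)) \<Longrightarrow>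
    comp C (bd1 C (tgt C l) (act C 2 l x)) l = comp C l (bd1 C (src C l) x)"
  using cc by (simp add: crossed_complex_def)

lemma bd_act: "2 \<le> n \<Longrightarrow> l \<in> arr C \<Longrightarrow> x \<in> carrier (cgrp C (Suc n) (src C l)) \<Longrightarrow>
    bd C n (tgt C l) (act C (Suc n) l x) = act C n l (bd C n (src C l) x)"
  using cc by (simp add: crossed_complex_def)

lemma conj_act: "c \<in> obj C \<Longrightarrow> a \<in> carrier (cgrp C 2 c) \<Longrightarrow> b \<in> carrier (cgrp C 2 c) \<Longrightarrow>
    act C 2 (bd1 C c a) b = a \<otimes>\<^bsub>cgrp C 2 c\<^esub> b \<otimes>\<^bsub>cgrp C 2 c\<^esub> inv\<^bsub>cgrp C 2 c\<^esub> a"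
  using cc by (simp add: crossed_complex_def)

lemma bd1_bd: "c \<in> obj C \<Longrightarrow> x \<in> carrier (cgrp C 3 c) \<Longrightarrow> bd1 C c (bd C 2 c x) = ident C c"
  using cc by (simp add: crossed_complex_def)

lemma bd_bd: "2 \<le> n \<Longrightarrow> c \<in> obj C \<Longrightarrow> x \<in> carrier (cgrp C (Suc (Suc n)) c) \<Longrightarrow>
    bd C n c (bd C (Suc n) c x) = \<one>\<^bsub>cgrp C n c\<^esub>"
  using cc by (simp add: crossed_complex_def)

end

context xc begin

abbreviation "\<pi>1 z \<equiv> N1 C #>\<^bsub>Z1 C\<^esub> z"

definition gens1 where
  "gens1 = {frag_of (comp C g f) - frag_of g - frag_of f | f g. f \<in> arr C \<and> g \<in> arr C \<and> tgt C f = src C g}"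

lemma N1_def': "N1 C = generate (Z1 C) gens1"
  by (simp add: N1_def gens1_def)

lemma Z1_comm: "comm_group (Z1 C)" by (simp add: Z1_def abelian_free_Abelian_group)
lemma Z1_group: "group (Z1 C)" by (simp add: Z1_def)
lemma Z0_comm: "comm_group (Z0 C)" by (simp add: Z0_def abelian_free_Abelian_group)
lemma Z0_group: "group (Z0 C)" by (simp add: Z0_def)

lemma Z1_carrier: "z \<in> carrier (Z1 C) \<longleftrightarrow> Poly_Mapping.keys z \<subseteq> arr C"
  by (simp add: Z1_def)
lemma Z0_carrier: "z \<in> carrier (Z0 C) \<longleftrightarrow> Poly_Mapping.keys z \<subseteq> obj C"
  by (simp add: Z0_def)
lemma Z1_mult: "x \<otimes>\<^bsub>Z1 C\<^esub> y = x + y" by (simp add: Z1_def)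
lemma Z0_mult: "x \<otimes>\<^bsub>Z0 C\<^esub> y = x + y" by (simp add: Z0_def)
lemma Z1_one: "\<one>\<^bsub>Z1 C\<^esub> = 0" by (simp add: Z1_def)
lemma Z0_one: "\<one>\<^bsub>Z0 C\<^esub> = 0" by (simp add: Z0_def)
lemma Z1_inv: "x \<in> carrier (Z1 C) \<Longrightarrow> inv\<^bsub>Z1 C\<^esub> x = - x" by (simp add: Z1_def)
lemma Z0_inv: "x \<in> carrier (Z0 C) \<Longrightarrow> inv\<^bsub>Z0 C\<^esub> x = - x" by (simp add: Z0_def)

lemma Z1_diff_carrier: "x \<in> carrier (Z1 C) \<Longrightarrow> y \<in> carrier (Z1 C) \<Longrightarrow> x - y \<in> carrier (Z1 C)"
  by (simp add: Z1_carrier) (meson keys_diff le_supI order_trans)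
lemma Z0_diff_carrier: "x \<in> carrier (Z0 C) \<Longrightarrow> y \<in> carrier (Z0 C) \<Longrightarrow> x - y \<in> carrier (Z0 C)"
  by (simp add: Z0_carrier) (meson keys_diff le_supI order_trans)
lemma Z1_add_carrier: "x \<in> carrier (Z1 C) \<Longrightarrow> y \<in> carrier (Z1 C) \<Longrightarrow> x + y \<in> carrier (Z1 C)"
  by (simp add: Z1_carrier) (meson keys_add le_supI order_trans)

lemma gens1_sub: "gens1 \<subseteq> carrier (Z1 C)"
  by (auto simp: gens1_def intro!: Z1_diff_carrier simp: Z1_carrier comp_props)

lemma N1_subgroup: "subgroup (N1 C) (Z1 C)"
  unfolding N1_def' by (rule group.generate_is_subgroup[OF Z1_group gens1_sub])

lemma N1_normal: "N1 C \<lhd> Z1 C"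
  using comm_group.subgroup_imp_normal[OF Z1_comm N1_subgroup] .

lemma Q1_comm: "comm_group (Q1 C)"
  unfolding Q1_def by (rule comm_group.abelian_FactGroup[OF Z1_comm N1_subgroup])

lemma Q1_group: "group (Q1 C)" using Q1_comm by (simp add: comm_group.axioms(2))

lemma gens1_N1: "f \<in> arr C \<Longrightarrow> g \<in> arr C \<Longrightarrow> tgt C f = src C g \<Longrightarrow>
   frag_of (comp C g f) - frag_of g - frag_of f \<in> N1 C"
  unfolding N1_def' by (rule generate.incl) (auto simp: gens1_def)

lemma pi1_hom: "\<pi>1 \<in> hom (Z1 C) (Q1 C)"
  unfolding Q1_def by (rule normal.r_coset_hom_Mod[OF N1_normal])

lemma pi1_carrier: "z \<in> carrier (Z1 C) \<Longrightarrow> \<pi>1 z \<in> carrier (Q1 C)"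
  using pi1_hom by (rule hom_carrier')

lemma pi1_add: "x \<in> carrier (Z1 C) \<Longrightarrow> y \<in> carrier (Z1 C) \<Longrightarrow> \<pi>1 (x + y) = \<pi>1 x \<otimes>\<^bsub>Q1 C\<^esub> \<pi>1 y"
  using hom_mult'[OF pi1_hom] by (simp add: Z1_mult)

lemma pi1_eqI: "x \<in> carrier (Z1 C) \<Longrightarrow> y \<in> carrier (Z1 C) \<Longrightarrow> x - y \<in> N1 C \<Longrightarrow> \<pi>1 x = \<pi>1 y"
  by (rule rcos_eqI[OF Z1_group N1_subgroup]) (simp_all add: Z1_mult Z1_inv)

lemma pi1_N1: "x \<in> N1 C \<Longrightarrow> \<pi>1 x = N1 C"
  by (rule subgroup.rcos_const[OF N1_subgroup Z1_group])

lemma pi1_one: "\<pi>1 x = \<one>\<^bsub>Q1 C\<^esub> \<longleftrightarrow> x \<in> N1 C" if "x \<in> carrier (Z1 C)"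
proof
  assume "\<pi>1 x = \<one>\<^bsub>Q1 C\<^esub>"
  then have "\<pi>1 x = N1 C" by (simp add: Q1_def)
  moreover have "x \<in> \<pi>1 x" using group.rcos_self[OF Z1_group that N1_subgroup] .
  ultimately show "x \<in> N1 C" by simp
next
  assume "x \<in> N1 C" then show "\<pi>1 x = \<one>\<^bsub>Q1 C\<^esub>" by (simp add: pi1_N1 Q1_def)
qed

lemma frag_arr: "l \<in> arr C \<Longrightarrow> frag_of l \<in> carrier (Z1 C)" by (simp add: Z1_carrier)

lemma pi1_comp: "f \<in> arr C \<Longrightarrow> g \<in> arr C \<Longrightarrow> tgt C f = src C g \<Longrightarrow>
   \<pi>1 (frag_of (comp C g f)) = \<pi>1 (frag_of f) \<otimes>\<^bsub>Q1 C\<^esub> \<pi>1 (frag_of g)"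
proof -
  assume fg: "f \<in> arr C" "g \<in> arr C" "tgt C f = src C g"
  have "\<pi>1 (frag_of (comp C g f)) = \<pi>1 (frag_of f + frag_of g)"
  proof (rule pi1_eqI)
    show "frag_of (comp C g f) \<in> carrier (Z1 C)" using fg comp_props by (simp add: frag_arr)
    show "frag_of f + frag_of g \<in> carrier (Z1 C)" using fg by (simp add: frag_arr Z1_add_carrier)
    have eq: "frag_of (comp C g f) - (frag_of f + frag_of g) = frag_of (comp C g f) - frag_of g - frag_of f"
      by (simp add: algebra_simps)
    show "frag_of (comp C g f) - (frag_of f + frag_of g) \<in> N1 C" using gens1_N1[OF fg] by (simp only: eq)
  qed
  then show ?thesis using fg by (simp add: pi1_add frag_arr)
qed

lemma frag_ident_N1: "c \<in> obj C \<Longrightarrow> frag_of (ident C c) \<in> N1 C"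
proof -
  assume c: "c \<in> obj C"
  have i: "ident C c \<in> arr C" "tgt C (ident C c) = src C (ident C c)" using ident_props c by auto
  have "comp C (ident C c) (ident C c) = ident C c"
    using comp_ident(1)[OF i(1)] ident_props(3)[OF c] by simp
  then have "- frag_of (ident C c) \<in> N1 C" using gens1_N1[OF i(1) i(1) i(2)] by simp
  then have "inv\<^bsub>Z1 C\<^esub> (- frag_of (ident C c)) \<in> N1 C" using subgroup.m_inv_closed[OF N1_subgroup] by blast
  moreover have "- frag_of (ident C c) \<in> carrier (Z1 C)" using i by (simp add: Z1_carrier)
  ultimately show ?thesis by (simp add: Z1_inv)
qed

lemma pi1_ident: "c \<in> obj C \<Longrightarrow> \<pi>1 (frag_of (ident C c)) = N1 C"
  by (simp add: frag_ident_N1 pi1_N1)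

lemma ab_d0_of: "ab_d0 C (frag_of l) = frag_of (tgt C l) - frag_of (src C l)"
  by (simp add: ab_d0_def)

lemma ab_d0_hom: "ab_d0 C \<in> hom (Z1 C) (Z0 C)"
proof (rule homI)
  fix z assume z: "z \<in> carrier (Z1 C)"
  have "Poly_Mapping.keys (ab_d0 C z) \<subseteq> obj C"
  proof -
    have "Poly_Mapping.keys (ab_d0 C z) \<subseteq> (\<Union>x \<in> Poly_Mapping.keys z. Poly_Mapping.keys (frag_of (tgt C x) - frag_of (src C x)))"
      unfolding ab_d0_def by (rule keys_frag_extend)
    also have "\<dots> \<subseteq> obj C"
    proof (rule UN_least)
      fix x assume "x \<in> Poly_Mapping.keys z"
      then have x: "x \<in> arr C" using z by (auto simp: Z1_carrier)
      show "Poly_Mapping.keys (frag_of (tgt C x) - frag_of (src C x)) \<subseteq> obj C"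
        using keys_diff[of "frag_of (tgt C x)" "frag_of (src C x)"] st_obj[OF x] by auto
    qed
    finally show ?thesis .
  qed
  then show "ab_d0 C z \<in> carrier (Z0 C)" by (simp add: Z0_carrier)
next
  fix x y assume "x \<in> carrier (Z1 C)" "y \<in> carrier (Z1 C)"
  then show "ab_d0 C (x \<otimes>\<^bsub>Z1 C\<^esub> y) = ab_d0 C x \<otimes>\<^bsub>Z0 C\<^esub> ab_d0 C y"
    by (simp add: Z1_mult Z0_mult ab_d0_def frag_extend_add)
qed

lemma ab_d0_N1: "z \<in> N1 C \<Longrightarrow> ab_d0 C z = \<one>\<^bsub>Z0 C\<^esub>"
  unfolding N1_def'
proof (rule hom_generate_kernel[OF Z1_group Z0_group ab_d0_hom gens1_sub])
  fix s assume "s \<in> gens1"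
  then obtain f g where fg: "f \<in> arr C" "g \<in> arr C" "tgt C f = src C g"
    and s: "s = frag_of (comp C g f) - frag_of g - frag_of f" by (auto simp: gens1_def)
  show "ab_d0 C s = \<one>\<^bsub>Z0 C\<^esub>"
    using fg comp_props[OF fg] by (simp add: s ab_d0_def frag_extend_diff Z0_one)
qed

definition phi0 :: "('m \<Rightarrow>\<^sub>0 int) set \<Rightarrow> ('o \<Rightarrow>\<^sub>0 int)" where
  "phi0 X = ab_d0 C (SOME z. z \<in> X)"

lemma phi0_hom: "phi0 \<in> hom (Q1 C) (Z0 C)"
  unfolding phi0_def Q1_def
  by (rule quot_hom[OF Z1_group N1_normal Z0_group ab_d0_hom ab_d0_N1])

lemma phi0_val: "z \<in> carrier (Z1 C) \<Longrightarrow> phi0 (\<pi>1 z) = ab_d0 C z"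
  unfolding phi0_def
  by (rule quot_val[OF Z1_group N1_subgroup Z0_group ab_d0_hom ab_d0_N1])

end

context xc begin

abbreviation "\<pi>n n x \<equiv> Nn n C #>\<^bsub>Sn n C\<^esub> x"

lemma grpI: "2 \<le> n \<Longrightarrow> (\<And>i. i \<in> obj C \<Longrightarrow> group (cgrp C n i))" using grp by blast

lemma Sn_group: "2 \<le> n \<Longrightarrow> group (Sn n C)"
  unfolding Sn_def by (rule sum_group) (simp add: grp)

lemma Sn_carrier: "2 \<le> n \<Longrightarrow> carrier (Sn n C) =
    {x \<in> \<Pi>\<^sub>E i\<in>obj C. carrier (cgrp C n i). finite {i \<in> obj C. x i \<noteq> \<one>\<^bsub>cgrp C n i\<^esub>}}"
  unfolding Sn_def by (rule carrier_sum_group) (simp add: grp)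

lemma Sn_mult: "x \<otimes>\<^bsub>Sn n C\<^esub> y = (\<lambda>p\<in>obj C. x p \<otimes>\<^bsub>cgrp C n p\<^esub> y p)"
  by (simp add: Sn_def)

lemma Sn_one: "\<one>\<^bsub>Sn n C\<^esub> = (\<lambda>p\<in>obj C. \<one>\<^bsub>cgrp C n p\<^esub>)"
  by (simp add: Sn_def)

lemma Sn_inv: "2 \<le> n \<Longrightarrow> x \<in> carrier (Sn n C) \<Longrightarrow> inv\<^bsub>Sn n C\<^esub> x = (\<lambda>p\<in>obj C. inv\<^bsub>cgrp C n p\<^esub> (x p))"
  unfolding Sn_def by (rule inv_sum_group) (simp_all add: grp Sn_def[symmetric])

lemma Sn_elem: "2 \<le> n \<Longrightarrow> x \<in> carrier (Sn n C) \<Longrightarrow> p \<in> obj C \<Longrightarrow> x p \<in> carrier (cgrp C n p)"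
  by (auto simp: Sn_carrier)

lemma inj_c_fun: "inj_c n C c = injS (obj C) (cgrp C n) c"
  by (rule ext) (simp add: inj_c_eq)

lemma inj_c_hom: "2 \<le> n \<Longrightarrow> c \<in> obj C \<Longrightarrow> inj_c n C c \<in> hom (cgrp C n c) (Sn n C)"
  unfolding inj_c_fun Sn_def by (rule injS_hom) (simp_all add: grp)

lemma inj_c_carrier: "2 \<le> n \<Longrightarrow> c \<in> obj C \<Longrightarrow> a \<in> carrier (cgrp C n c) \<Longrightarrow> inj_c n C c a \<in> carrier (Sn n C)"
  using inj_c_hom by (rule hom_carrier')

lemma inj_c_mult: "2 \<le> n \<Longrightarrow> c \<in> obj C \<Longrightarrow> a \<in> carrier (cgrp C n c) \<Longrightarrow> b \<in> carrier (cgrp C n c) \<Longrightarrow>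
    inj_c n C c (a \<otimes>\<^bsub>cgrp C n c\<^esub> b) = inj_c n C c a \<otimes>\<^bsub>Sn n C\<^esub> inj_c n C c b"
  using inj_c_hom by (rule hom_mult')

lemma inj_c_inv: "2 \<le> n \<Longrightarrow> c \<in> obj C \<Longrightarrow> a \<in> carrier (cgrp C n c) \<Longrightarrow>
    inj_c n C c (inv\<^bsub>cgrp C n c\<^esub> a) = inv\<^bsub>Sn n C\<^esub> inj_c n C c a"
  using hom_inv'[OF grp Sn_group inj_c_hom] by blast

lemma inj_c_one: "c \<in> obj C \<Longrightarrow> inj_c n C c \<one>\<^bsub>cgrp C n c\<^esub> = \<one>\<^bsub>Sn n C\<^esub>"
  by (auto simp: inj_c_def Sn_one)

definition gensN :: "nat \<Rightarrow> ('o \<Rightarrow> 'e) set" where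
  "gensN n = {inj_c n C (tgt C l) (act C n l x) \<otimes>\<^bsub>Sn n C\<^esub> inv\<^bsub>Sn n C\<^esub> (inj_c n C (src C l) x) | l x.
        l \<in> arr C \<and> x \<in> carrier (cgrp C n (src C l))}"

lemma Nn_def': "Nn n C = generate (Sn n C) (gensN n)"
  by (simp add: Nn_def gensN_def)

lemma act_carrier: "2 \<le> n \<Longrightarrow> l \<in> arr C \<Longrightarrow> x \<in> carrier (cgrp C n (src C l)) \<Longrightarrow> act C n l x \<in> carrier (cgrp C n (tgt C l))"
  using act_hom by (rule hom_carrier')

lemma gensN_sub: "2 \<le> n \<Longrightarrow> gensN n \<subseteq> carrier (Sn n C)"
proof
  fix s assume n: "2 \<le> n" and "s \<in> gensN n"
  then obtain l x where lx: "l \<in> arr C" "x \<in> carrier (cgrp C n (src C l))"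
    and s: "s = inj_c n C (tgt C l) (act C n l x) \<otimes>\<^bsub>Sn n C\<^esub> inv\<^bsub>Sn n C\<^esub> (inj_c n C (src C l) x)"
    by (auto simp: gensN_def)
  interpret S: group "Sn n C" by (rule Sn_group[OF n])
  show "s \<in> carrier (Sn n C)"
    using s lx n st_obj by (simp add: inj_c_carrier act_carrier)
qed

lemma Nn_subgroup: "2 \<le> n \<Longrightarrow> subgroup (Nn n C) (Sn n C)"
  unfolding Nn_def' by (rule group.generate_is_subgroup[OF Sn_group gensN_sub])

lemma gensN_Nn: "l \<in> arr C \<Longrightarrow> x \<in> carrier (cgrp C n (src C l)) \<Longrightarrow>
   inj_c n C (tgt C l) (act C n l x) \<otimes>\<^bsub>Sn n C\<^esub> inv\<^bsub>Sn n C\<^esub> (inj_c n C (src C l) x) \<in> Nn n C"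
  unfolding Nn_def' by (rule generate.incl) (auto simp: gensN_def)

lemma Nn_comm:
  assumes n: "2 \<le> n" and x: "x \<in> carrier (Sn n C)" and y: "y \<in> carrier (Sn n C)"
  shows "x \<otimes>\<^bsub>Sn n C\<^esub> y \<otimes>\<^bsub>Sn n C\<^esub> inv\<^bsub>Sn n C\<^esub> x \<otimes>\<^bsub>Sn n C\<^esub> inv\<^bsub>Sn n C\<^esub> y \<in> Nn n C"
proof -
  interpret S: group "Sn n C" by (rule Sn_group[OF n])
  define z where "z = (\<lambda>i\<in>obj C. x i \<otimes>\<^bsub>cgrp C n i\<^esub> y i \<otimes>\<^bsub>cgrp C n i\<^esub> inv\<^bsub>cgrp C n i\<^esub> (x i) \<otimes>\<^bsub>cgrp C n i\<^esub> inv\<^bsub>cgrp C n i\<^esub> (y i))"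
  have eq: "x \<otimes>\<^bsub>Sn n C\<^esub> y \<otimes>\<^bsub>Sn n C\<^esub> inv\<^bsub>Sn n C\<^esub> x \<otimes>\<^bsub>Sn n C\<^esub> inv\<^bsub>Sn n C\<^esub> y = z"
    by (simp add: Sn_inv[OF n x] Sn_inv[OF n y] Sn_mult z_def fun_eq_iff)
  have zc: "z \<in> carrier (Sn n C)" using eq x y by (metis S.inv_closed S.m_closed)
  have "z \<in> Nn n C"
    unfolding Sn_def
  proof (rule sum_group_in_subgroup[of "obj C" "cgrp C n"])
    show "\<And>i. i \<in> obj C \<Longrightarrow> group (cgrp C n i)" using grp n by blast
    show "subgroup (Nn n C) (sum_group (obj C) (cgrp C n))" using Nn_subgroup[OF n] by (simp add: Sn_def)
    show "z \<in> carrier (sum_group (obj C) (cgrp C n))" using zc by (simp add: Sn_def)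
  next
    fix i assume i: "i \<in> obj C"
    interpret G: group "cgrp C n i" by (rule grp[OF n i])
    have a: "x i \<in> carrier (cgrp C n i)" and b: "y i \<in> carrier (cgrp C n i)"
      using Sn_elem[OF n x i] Sn_elem[OF n y i] .
    show "injS (obj C) (cgrp C n) i (z i) \<in> Nn n C"
    proof (cases "n = 2")
      case True
      define l where "l = bd1 C i (x i)"
      have l: "l \<in> arr C" "src C l = i" "tgt C l = i" using bd1_props[OF i] a True by (auto simp: l_def)
      have "inj_c n C (tgt C l) (act C n l (y i)) \<otimes>\<^bsub>Sn n C\<^esub> inv\<^bsub>Sn n C\<^esub> (inj_c n C (src C l) (y i)) \<in> Nn n C"
        by (rule gensN_Nn) (use l b in auto)
      moreover have "act C n l (y i) = x i \<otimes>\<^bsub>cgrp C n i\<^esub> y i \<otimes>\<^bsub>cgrp C n i\<^esub> inv\<^bsub>cgrp C n i\<^esub> (x i)"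
        using conj_act[OF i] a b True by (simp add: l_def)
      ultimately have "inj_c n C i (x i \<otimes>\<^bsub>cgrp C n i\<^esub> y i \<otimes>\<^bsub>cgrp C n i\<^esub> inv\<^bsub>cgrp C n i\<^esub> (x i))
          \<otimes>\<^bsub>Sn n C\<^esub> inj_c n C i (inv\<^bsub>cgrp C n i\<^esub> (y i)) \<in> Nn n C"
        using l inj_c_inv[OF n i b] by simp
      then have "inj_c n C i (z i) \<in> Nn n C"
        using inj_c_mult[OF n i] a b i by (simp add: z_def)
      then show ?thesis by (simp add: inj_c_eq)
    next
      case False
      then have "2 < n" using n by simp
      interpret G': comm_group "cgrp C n i" by (rule cgrp_comm[OF \<open>2 < n\<close> i])
      have "z i = \<one>\<^bsub>cgrp C n i\<^esub>"
        using a b i by (simp add: z_def G'.m_comm[of "x i" "y i"] G.m_assoc)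
      then show ?thesis
        using inj_c_one[OF i, of n] subgroup.one_closed[OF Nn_subgroup[OF n]] by (simp add: inj_c_eq)
    qed
  qed
  then show ?thesis using eq by simp
qed

lemma Nn_normal: "2 \<le> n \<Longrightarrow> Nn n C \<lhd> Sn n C"
  using comm_quot(1)[OF Sn_group Nn_subgroup Nn_comm] by blast

lemma Qn_comm: "2 \<le> n \<Longrightarrow> comm_group (Qn n C)"
  unfolding Qn_def using comm_quot(2)[OF Sn_group Nn_subgroup Nn_comm] by blast

lemma Qn_group: "2 \<le> n \<Longrightarrow> group (Qn n C)"
  using Qn_comm by (simp add: comm_group.axioms(2))

lemma pin_hom: "2 \<le> n \<Longrightarrow> \<pi>n n \<in> hom (Sn n C) (Qn n C)"
  unfolding Qn_def by (rule normal.r_coset_hom_Mod[OF Nn_normal])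

lemma pin_carrier: "2 \<le> n \<Longrightarrow> x \<in> carrier (Sn n C) \<Longrightarrow> \<pi>n n x \<in> carrier (Qn n C)"
  using pin_hom by (rule hom_carrier')

lemma pin_N: "2 \<le> n \<Longrightarrow> x \<in> Nn n C \<Longrightarrow> \<pi>n n x = \<one>\<^bsub>Qn n C\<^esub>"
  by (simp add: Qn_def subgroup.rcos_const[OF Nn_subgroup Sn_group])

lemma inj_act_eq: "2 \<le> n \<Longrightarrow> l \<in> arr C \<Longrightarrow> x \<in> carrier (cgrp C n (src C l)) \<Longrightarrow>
   \<pi>n n (inj_c n C (tgt C l) (act C n l x)) = \<pi>n n (inj_c n C (src C l) x)"
  by (rule rcos_eqI[OF Sn_group Nn_subgroup])
     (simp_all add: gensN_Nn inj_c_carrier act_carrier st_obj)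

end

context xc begin

lemma bd_carrier: "2 \<le> n \<Longrightarrow> c \<in> obj C \<Longrightarrow> x \<in> carrier (cgrp C (Suc n) c) \<Longrightarrow> bd C n c x \<in> carrier (cgrp C n c)"
  using bd_hom by (rule hom_carrier')

lemma bd_one: "2 \<le> n \<Longrightarrow> c \<in> obj C \<Longrightarrow> bd C n c \<one>\<^bsub>cgrp C (Suc n) c\<^esub> = \<one>\<^bsub>cgrp C n c\<^esub>"
  by (rule hom_one'[OF grp grp bd_hom]) simp_all

lemma ab_dn_hom: assumes n: "2 \<le> n" shows "ab_dn n C \<in> hom (Sn (Suc n) C) (Sn n C)"
proof (rule homI)
  have n': "2 \<le> Suc n" using n by simp
  fix x assume x: "x \<in> carrier (Sn (Suc n) C)"
  have "\<And>p. p \<in> obj C \<Longrightarrow> bd C n p (x p) \<in> carrier (cgrp C n p)"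
    using bd_carrier[OF n] Sn_elem[OF n' x] by blast
  then have "ab_dn n C x \<in> (\<Pi>\<^sub>E i\<in>obj C. carrier (cgrp C n i))"
    by (simp add: ab_dn_def)
  moreover have "{i \<in> obj C. ab_dn n C x i \<noteq> \<one>\<^bsub>cgrp C n i\<^esub>} \<subseteq> {i \<in> obj C. x i \<noteq> \<one>\<^bsub>cgrp C (Suc n) i\<^esub>}"
    using bd_one[OF n] by (auto simp: ab_dn_def)
  moreover have "finite {i \<in> obj C. x i \<noteq> \<one>\<^bsub>cgrp C (Suc n) i\<^esub>}" using x by (simp add: Sn_carrier[OF n'])
  ultimately show "ab_dn n C x \<in> carrier (Sn n C)"
    by (simp add: Sn_carrier[OF n] finite_subset)
next
  have n': "2 \<le> Suc n" using n by simp
  fix x y assume x: "x \<in> carrier (Sn (Suc n) C)" and y: "y \<in> carrier (Sn (Suc n) C)"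
  show "ab_dn n C (x \<otimes>\<^bsub>Sn (Suc n) C\<^esub> y) = ab_dn n C x \<otimes>\<^bsub>Sn n C\<^esub> ab_dn n C y"
  proof (rule ext)
    fix p show "ab_dn n C (x \<otimes>\<^bsub>Sn (Suc n) C\<^esub> y) p = (ab_dn n C x \<otimes>\<^bsub>Sn n C\<^esub> ab_dn n C y) p"
    proof (cases "p \<in> obj C")
      case True
      then show ?thesis using Sn_elem[OF n' x True] Sn_elem[OF n' y True]
        by (simp add: ab_dn_def Sn_mult hom_mult'[OF bd_hom[OF n True]])
    qed (simp add: ab_dn_def Sn_mult)
  qed
qed

lemma ab_dn_inj: "2 \<le> n \<Longrightarrow> c \<in> obj C \<Longrightarrow> a \<in> carrier (cgrp C (Suc n) c) \<Longrightarrow>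
    ab_dn n C (inj_c (Suc n) C c a) = inj_c n C c (bd C n c a)"
  by (auto simp: ab_dn_def inj_c_def fun_eq_iff bd_one)

lemma ab_dn_N: assumes n: "2 \<le> n" and x: "x \<in> Nn (Suc n) C" shows "ab_dn n C x \<in> Nn n C"
proof -
  have n': "2 \<le> Suc n" using n by simp
  have x': "x \<in> generate (Sn (Suc n) C) (gensN (Suc n))" using x by (simp add: Nn_def')
  show ?thesis
  proof (rule hom_generate_into[OF Sn_group[OF n'] Sn_group[OF n] ab_dn_hom[OF n] gensN_sub[OF n'] Nn_subgroup[OF n] _ x'])
    fix s assume "s \<in> gensN (Suc n)"
    then obtain l b where lb: "l \<in> arr C" "b \<in> carrier (cgrp C (Suc n) (src C l))"
      and s: "s = inj_c (Suc n) C (tgt C l) (act C (Suc n) l b) \<otimes>\<^bsub>Sn (Suc n) C\<^esub> inv\<^bsub>Sn (Suc n) C\<^esub> (inj_c (Suc n) C (src C l) b)"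
      by (auto simp: gensN_def)
    have st: "src C l \<in> obj C" "tgt C l \<in> obj C" using st_obj lb by auto
    have ac: "act C (Suc n) l b \<in> carrier (cgrp C (Suc n) (tgt C l))" using act_carrier[OF n' lb] .
    have bc: "bd C n (src C l) b \<in> carrier (cgrp C n (src C l))" using bd_carrier[OF n st(1) lb(2)] .
    have "ab_dn n C s = inj_c n C (tgt C l) (bd C n (tgt C l) (act C (Suc n) l b)) \<otimes>\<^bsub>Sn n C\<^esub>
        inv\<^bsub>Sn n C\<^esub> (inj_c n C (src C l) (bd C n (src C l) b))"
      using s hom_mult'[OF ab_dn_hom[OF n]] hom_inv'[OF Sn_group[OF n'] Sn_group[OF n] ab_dn_hom[OF n]]
        inj_c_carrier[OF n' st(2) ac] inj_c_carrier[OF n' st(1) lb(2)] group.inv_closed[OF Sn_group[OF n']]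
        ab_dn_inj[OF n st(2) ac] ab_dn_inj[OF n st(1) lb(2)]
      by simp
    also have "\<dots> = inj_c n C (tgt C l) (act C n l (bd C n (src C l) b)) \<otimes>\<^bsub>Sn n C\<^esub>
        inv\<^bsub>Sn n C\<^esub> (inj_c n C (src C l) (bd C n (src C l) b))"
      using bd_act[OF n lb] by simp
    also have "\<dots> \<in> Nn n C" using gensN_Nn[OF lb(1) bc] .
    finally show "ab_dn n C s \<in> Nn n C" .
  qed
qed

definition phin :: "nat \<Rightarrow> ('o \<Rightarrow> 'e) set \<Rightarrow> ('o \<Rightarrow> 'e) set" where
  "phin n X = \<pi>n n (ab_dn n C (SOME x. x \<in> X))"

lemma pin_ab_dn_hom: "2 \<le> n \<Longrightarrow> (\<lambda>x. \<pi>n n (ab_dn n C x)) \<in> hom (Sn (Suc n) C) (Qn n C)"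
proof -
  assume n: "2 \<le> n"
  have "(\<lambda>x. \<pi>n n (ab_dn n C x)) = (\<lambda>x. \<pi>n n x) \<circ> ab_dn n C" by (rule ext) simp
  then show ?thesis using hom_compose[OF ab_dn_hom[OF n] pin_hom[OF n]] by (simp only:)
qed

lemma phin_hom: "2 \<le> n \<Longrightarrow> phin n \<in> hom (Qn (Suc n) C) (Qn n C)"
  unfolding phin_def Qn_def[of "Suc n"]
  by (rule quot_hom[OF Sn_group Nn_normal Qn_group pin_ab_dn_hom]) (simp_all add: pin_N ab_dn_N)

lemma phin_val: "2 \<le> n \<Longrightarrow> x \<in> carrier (Sn (Suc n) C) \<Longrightarrow> phin n (\<pi>n (Suc n) x) = \<pi>n n (ab_dn n C x)"
  unfolding phin_def
  by (rule quot_val[OF Sn_group Nn_subgroup Qn_group pin_ab_dn_hom]) (simp_all add: pin_N ab_dn_N)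

end

context xc begin

abbreviation "Phi p a \<equiv> \<pi>1 (frag_of (bd1 C p a))"

lemma Phi_hom: assumes p: "p \<in> obj C" shows "(\<lambda>a. Phi p a) \<in> hom (cgrp C 2 p) (Q1 C)"
proof (rule homI)
  fix a assume "a \<in> carrier (cgrp C 2 p)"
  then show "Phi p a \<in> carrier (Q1 C)" using bd1_props[OF p] by (simp add: pi1_carrier frag_arr)
next
  interpret Q: comm_group "Q1 C" by (rule Q1_comm)
  fix a b assume a: "a \<in> carrier (cgrp C 2 p)" and b: "b \<in> carrier (cgrp C 2 p)"
  have "Phi p (a \<otimes>\<^bsub>cgrp C 2 p\<^esub> b) = Phi p b \<otimes>\<^bsub>Q1 C\<^esub> Phi p a"
    using bd1_mult[OF p a b] pi1_comp[of "bd1 C p b" "bd1 C p a"] bd1_props[OF p] a b by simp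
  also have "\<dots> = Phi p a \<otimes>\<^bsub>Q1 C\<^esub> Phi p b"
    using bd1_props[OF p] a b by (simp add: Q.m_comm pi1_carrier frag_arr)
  finally show "Phi p (a \<otimes>\<^bsub>cgrp C 2 p\<^esub> b) = Phi p a \<otimes>\<^bsub>Q1 C\<^esub> Phi p b" .
qed

lemma Phi_one: "p \<in> obj C \<Longrightarrow> Phi p \<one>\<^bsub>cgrp C 2 p\<^esub> = \<one>\<^bsub>Q1 C\<^esub>"
  using hom_one'[OF grp Q1_group Phi_hom] by simp

definition sigma :: "('o \<Rightarrow> 'e) \<Rightarrow> ('m \<Rightarrow>\<^sub>0 int) set" where
  "sigma x = gfinprod (Q1 C) (\<lambda>p. Phi p (x p)) (obj C)"

lemma sigma_hom: "sigma \<in> hom (Sn 2 C) (Q1 C)"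
  unfolding sigma_def Sn_def
  by (rule hom_group_sum_injS[OF Q1_comm]) (simp_all add: grp Phi_hom)

lemma sigma_inj: "c \<in> obj C \<Longrightarrow> a \<in> carrier (cgrp C 2 c) \<Longrightarrow> sigma (inj_c 2 C c a) = Phi c a"
  unfolding sigma_def inj_c_eq
  by (rule gfinprod_injS[OF Q1_comm, where f = "\<lambda>p a. Phi p a"]) (simp_all add: grp Phi_hom)

lemma pi1_sum: "finite S \<Longrightarrow> (\<forall>p\<in>S. F p \<in> carrier (Z1 C)) \<Longrightarrow>
    \<pi>1 (sum F S) = finprod (Q1 C) (\<lambda>p. \<pi>1 (F p)) S"
proof (induction S rule: finite_induct)
  case empty
  interpret Q: comm_group "Q1 C" by (rule Q1_comm)
  have "0 \<in> N1 C" using subgroup.one_closed[OF N1_subgroup] by (simp add: Z1_one)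
  then have "\<pi>1 (sum F {}) = \<one>\<^bsub>Q1 C\<^esub>" by (simp add: pi1_N1 Q1_def)
  then show ?case by simp
next
  case (insert a S)
  interpret Q: comm_group "Q1 C" by (rule Q1_comm)
  have sc: "sum F S \<in> carrier (Z1 C)"
    using insert.prems unfolding Z1_def by (intro sum_closed_free_Abelian_group) auto
  have "\<pi>1 (sum F (insert a S)) = \<pi>1 (F a) \<otimes>\<^bsub>Q1 C\<^esub> \<pi>1 (sum F S)"
    using insert sc by (simp add: pi1_add)
  also have "\<dots> = finprod (Q1 C) (\<lambda>p. \<pi>1 (F p)) (insert a S)"
    using insert by (simp add: pi1_carrier Pi_def)
  finally show ?case .
qed

lemma ab_d1_carrier: "x \<in> carrier (Sn 2 C) \<Longrightarrow> ab_d1 C x \<in> carrier (Z1 C)"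
  unfolding ab_d1_def Z1_def
  by (rule sum_closed_free_Abelian_group) (auto simp: bd1_props Sn_elem)

lemma sigma_eq: assumes x: "x \<in> carrier (Sn 2 C)" shows "sigma x = \<pi>1 (ab_d1 C x)"
proof -
  interpret Q: comm_group "Q1 C" by (rule Q1_comm)
  let ?S = "{p \<in> obj C. x p \<noteq> \<one>\<^bsub>cgrp C 2 p\<^esub>}"
  have fin: "finite ?S" using x by (simp add: Sn_carrier)
  have car: "(\<lambda>p. Phi p (x p)) \<in> obj C \<rightarrow> carrier (Q1 C)"
    using x by (auto simp: pi1_carrier frag_arr bd1_props Sn_elem)
  have "sigma x = gfinprod (Q1 C) (\<lambda>p. Phi p (x p)) ?S"
    unfolding sigma_def
    by (rule Q.gfinprod_mono_neutral_cong_right) (use car Phi_one in auto)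
  also have "\<dots> = finprod (Q1 C) (\<lambda>p. Phi p (x p)) ?S"
    using fin car by (intro Q.gfinprod_eq_finprod) auto
  also have "\<dots> = \<pi>1 (ab_d1 C x)"
    unfolding ab_d1_def using fin x
    by (intro pi1_sum[symmetric]) (auto simp: frag_arr bd1_props Sn_elem)
  finally show ?thesis .
qed

lemma Phi_act: assumes l: "l \<in> arr C" and b: "b \<in> carrier (cgrp C 2 (src C l))"
  shows "Phi (tgt C l) (act C 2 l b) = Phi (src C l) b"
proof -
  interpret Q: comm_group "Q1 C" by (rule Q1_comm)
  have st: "src C l \<in> obj C" "tgt C l \<in> obj C" using st_obj l by auto
  have ac: "act C 2 l b \<in> carrier (cgrp C 2 (tgt C l))" using act_carrier[OF _ l b] by simp
  have e1: "\<pi>1 (frag_of (comp C (bd1 C (tgt C l) (act C 2 l b)) l)) = \<pi>1 (frag_of l) \<otimes>\<^bsub>Q1 C\<^esub> Phi (tgt C l) (act C 2 l b)"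
    by (rule pi1_comp) (use l st ac bd1_props in auto)
  have e2: "\<pi>1 (frag_of (comp C l (bd1 C (src C l) b))) = Phi (src C l) b \<otimes>\<^bsub>Q1 C\<^esub> \<pi>1 (frag_of l)"
    by (rule pi1_comp) (use l st b bd1_props in auto)
  have c1: "\<pi>1 (frag_of l) \<in> carrier (Q1 C)" using l by (simp add: pi1_carrier frag_arr)
  have c2: "Phi (tgt C l) (act C 2 l b) \<in> carrier (Q1 C)" using st ac bd1_props by (simp add: pi1_carrier frag_arr)
  have c3: "Phi (src C l) b \<in> carrier (Q1 C)" using st b bd1_props by (simp add: pi1_carrier frag_arr)
  have "\<pi>1 (frag_of l) \<otimes>\<^bsub>Q1 C\<^esub> Phi (tgt C l) (act C 2 l b) = \<pi>1 (frag_of l) \<otimes>\<^bsub>Q1 C\<^esub> Phi (src C l) b"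
    using e1 e2 bd1_act[OF l b] c1 c3 Q.m_comm by metis
  then show ?thesis using c1 c2 c3 by simp
qed

lemma sigma_N: assumes x: "x \<in> Nn 2 C" shows "sigma x = \<one>\<^bsub>Q1 C\<^esub>"
proof -
  have x': "x \<in> generate (Sn 2 C) (gensN 2)" using x by (simp add: Nn_def')
  show ?thesis
  proof (rule hom_generate_kernel[OF Sn_group Q1_group sigma_hom gensN_sub _ x'])
    show "2 \<le> (2::nat)" by simp
    show "2 \<le> (2::nat)" by simp
    interpret Q: comm_group "Q1 C" by (rule Q1_comm)
    fix s assume "s \<in> gensN 2"
    then obtain l b where lb: "l \<in> arr C" "b \<in> carrier (cgrp C 2 (src C l))"
      and s: "s = inj_c 2 C (tgt C l) (act C 2 l b) \<otimes>\<^bsub>Sn 2 C\<^esub> inv\<^bsub>Sn 2 C\<^esub> (inj_c 2 C (src C l) b)"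
      by (auto simp: gensN_def)
    have st: "src C l \<in> obj C" "tgt C l \<in> obj C" using st_obj lb by auto
    have ac: "act C 2 l b \<in> carrier (cgrp C 2 (tgt C l))" using act_carrier[OF _ lb] by simp
    have i1: "inj_c 2 C (tgt C l) (act C 2 l b) \<in> carrier (Sn 2 C)" using inj_c_carrier[OF _ st(2) ac] by simp
    have i2: "inj_c 2 C (src C l) b \<in> carrier (Sn 2 C)" using inj_c_carrier[OF _ st(1) lb(2)] by simp
    have "sigma s = sigma (inj_c 2 C (tgt C l) (act C 2 l b)) \<otimes>\<^bsub>Q1 C\<^esub> inv\<^bsub>Q1 C\<^esub> sigma (inj_c 2 C (src C l) b)"
      using s hom_mult'[OF sigma_hom] hom_inv'[OF Sn_group Q1_group sigma_hom] i1 i2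
        group.inv_closed[OF Sn_group] by simp
    also have "\<dots> = Phi (src C l) b \<otimes>\<^bsub>Q1 C\<^esub> inv\<^bsub>Q1 C\<^esub> Phi (src C l) b"
      using sigma_inj[OF st(2) ac] sigma_inj[OF st(1) lb(2)] Phi_act[OF lb] by simp
    also have "\<dots> = \<one>\<^bsub>Q1 C\<^esub>" using st lb bd1_props by (simp add: pi1_carrier frag_arr)
    finally show "sigma s = \<one>\<^bsub>Q1 C\<^esub>" .
  qed
qed

definition phi1 :: "('o \<Rightarrow> 'e) set \<Rightarrow> ('m \<Rightarrow>\<^sub>0 int) set" where
  "phi1 X = \<pi>1 (ab_d1 C (SOME x. x \<in> X))"

lemma pi1_ab_d1_hom: "(\<lambda>x. \<pi>1 (ab_d1 C x)) \<in> hom (Sn 2 C) (Q1 C)"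
  by (rule hom_cong[OF Sn_group sigma_hom]) (simp_all add: sigma_eq)

lemma pi1_ab_d1_N: "x \<in> Nn 2 C \<Longrightarrow> \<pi>1 (ab_d1 C x) = \<one>\<^bsub>Q1 C\<^esub>"
  using sigma_N sigma_eq subgroup.mem_carrier[OF Nn_subgroup] by (metis order_refl)

lemma phi1_hom: "phi1 \<in> hom (Qn 2 C) (Q1 C)"
  unfolding phi1_def Qn_def
  by (rule quot_hom[OF Sn_group Nn_normal Q1_group pi1_ab_d1_hom pi1_ab_d1_N]) simp_all

lemma phi1_val: "x \<in> carrier (Sn 2 C) \<Longrightarrow> phi1 (\<pi>n 2 x) = sigma x"
  unfolding phi1_def using sigma_eq
  by (simp add: quot_val[OF Sn_group Nn_subgroup Q1_group pi1_ab_d1_hom pi1_ab_d1_N])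

end

lemma inj_Inl: "inj Inl" by (simp add: inj_def)
lemma inj_InrInl: "inj (Inr \<circ> Inl)" by (simp add: inj_def)
lemma inj_InrInr: "inj (Inr \<circ> Inr)" by (simp add: inj_def)

context xc begin

abbreviation "Ab \<equiv> Ab_Cr C"

lemma cgr0: "cgr Ab 0 = transport Inl (Z0 C)" by (simp add: Ab_Cr_def)
lemma cgr1: "cgr Ab (Suc 0) = transport (Inr \<circ> Inl) (Q1 C)" by (simp add: Ab_Cr_def)
lemma cgrn: "cgr Ab (Suc (Suc m)) = transport (Inr \<circ> Inr) (Qn (Suc (Suc m)) C)" by (simp add: Ab_Cr_def)

lemma dif0: "dif Ab 0 (Inr (Inl X)) = Inl (phi0 X)" by (simp add: Ab_Cr_def un1_def phi0_def)
lemma dif1: "dif Ab (Suc 0) (Inr (Inr X)) = Inr (Inl (phi1 X))" by (simp add: Ab_Cr_def unn_def phi1_def)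
lemma difn: "dif Ab (Suc (Suc m)) (Inr (Inr X)) = Inr (Inr (phin (Suc (Suc m)) X))"
  by (simp add: Ab_Cr_def unn_def phin_def)

lemma car0: "carrier (cgr Ab 0) = Inl ` carrier (Z0 C)" by (simp add: cgr0 transport_carrier)
lemma car1: "carrier (cgr Ab (Suc 0)) = (\<lambda>X. Inr (Inl X)) ` carrier (Q1 C)"
  by (simp add: cgr1 transport_carrier image_comp[symmetric] comp_def)
lemma carn: "carrier (cgr Ab (Suc (Suc m))) = (\<lambda>X. Inr (Inr X)) ` carrier (Qn (Suc (Suc m)) C)"
  by (simp add: cgrn transport_carrier image_comp[symmetric] comp_def)

lemma one0: "\<one>\<^bsub>cgr Ab 0\<^esub> = Inl 0" by (simp add: cgr0 transport_one Z0_one)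
lemma one1: "\<one>\<^bsub>cgr Ab (Suc 0)\<^esub> = Inr (Inl (N1 C))" by (simp add: cgr1 transport_one Q1_def)
lemma onen: "\<one>\<^bsub>cgr Ab (Suc (Suc m))\<^esub> = Inr (Inr (Nn (Suc (Suc m)) C))" by (simp add: cgrn transport_one Qn_def)

lemma mult0: "a \<in> carrier (Z0 C) \<Longrightarrow> b \<in> carrier (Z0 C) \<Longrightarrow> Inl a \<otimes>\<^bsub>cgr Ab 0\<^esub> Inl b = Inl (a + b)"
  using transport_mult[OF inj_Inl, of a "Z0 C" b] by (simp add: cgr0 Z0_mult)
lemma mult1: "X \<in> carrier (Q1 C) \<Longrightarrow> Y \<in> carrier (Q1 C) \<Longrightarrow>
    Inr (Inl X) \<otimes>\<^bsub>cgr Ab (Suc 0)\<^esub> Inr (Inl Y) = Inr (Inl (X \<otimes>\<^bsub>Q1 C\<^esub> Y))"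
  using transport_mult[OF inj_InrInl, of X "Q1 C" Y] by (simp add: cgr1)

lemma Qn2: "Qn (Suc (Suc 0)) C = Qn 2 C" by (simp add: numeral_2_eq_2)

lemma Ab_comm: "comm_group (cgr Ab n)"
proof (cases n)
  case 0 then show ?thesis by (simp add: cgr0 transport_comm_group[OF inj_Inl Z0_comm])
next
  case (Suc m)
  then show ?thesis
  proof (cases m)
    case 0 then show ?thesis using Suc by (simp add: cgr1 transport_comm_group[OF inj_InrInl Q1_comm])
  next
    case (Suc k)
    then show ?thesis using \<open>n = Suc m\<close> by (simp add: cgrn transport_comm_group[OF inj_InrInr Qn_comm])
  qed
qed

lemma Ab_group: "group (cgr Ab n)" using Ab_comm by (simp add: comm_group.axioms(2))

lemma dif_hom: "dif Ab n \<in> hom (cgr Ab (Suc n)) (cgr Ab n)"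
proof (cases n)
  case 0
  show ?thesis unfolding 0 cgr0 cgr1
    by (rule transport_hom[OF inj_InrInl inj_Inl Q1_group phi0_hom]) (simp add: dif0)
next
  case (Suc m)
  then show ?thesis
  proof (cases m)
    case 0
    show ?thesis unfolding Suc 0 cgr1 cgrn Qn2
      by (rule transport_hom[OF inj_InrInr inj_InrInl Qn_group phi1_hom]) (simp_all add: dif1)
  next
    case (Suc k)
    show ?thesis unfolding \<open>n = Suc m\<close> Suc cgrn
      by (rule transport_hom[OF inj_InrInr inj_InrInr Qn_group phin_hom]) (simp_all add: difn)
  qed
qed

lemma ab_d0_ab_d1: "x \<in> carrier (Sn 2 C) \<Longrightarrow> ab_d0 C (ab_d1 C x) = 0"
  unfolding ab_d1_def ab_d0_def
  by (subst frag_extend_sum) (auto simp: Sn_carrier bd1_props Sn_elem intro!: sum.neutral)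

lemma sigma_ab_dn: assumes x: "x \<in> carrier (Sn 3 C)" shows "sigma (ab_dn 2 C x) = \<one>\<^bsub>Q1 C\<^esub>"
proof -
  have h1: "(\<lambda>x. sigma (ab_dn 2 C x)) \<in> hom (Sn 3 C) (Q1 C)"
  proof -
    have "(\<lambda>x. sigma (ab_dn 2 C x)) = sigma \<circ> ab_dn 2 C" by (rule ext) simp
    then show ?thesis using hom_compose[OF ab_dn_hom[of 2] sigma_hom] by simp
  qed
  have h2: "(\<lambda>x. \<one>\<^bsub>Q1 C\<^esub>) \<in> hom (Sn 3 C) (Q1 C)"
    by (rule const_one_hom) (simp_all add: group.is_monoid Q1_group Sn_group)
  show ?thesis
  proof (rule sum_hom_unique[of "obj C" "cgrp C 3" "Q1 C", folded Sn_def, OF _ Q1_group h1 h2 _ x])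
    show "\<And>i. i \<in> obj C \<Longrightarrow> group (cgrp C 3 i)" by (simp add: grp)
  next
    fix c a assume c: "c \<in> obj C" and a: "a \<in> carrier (cgrp C 3 c)"
    have "sigma (ab_dn 2 C (inj_c 3 C c a)) = sigma (inj_c 2 C c (bd C 2 c a))"
      using ab_dn_inj[of 2 c a] c a by simp
    also have "\<dots> = \<one>\<^bsub>Q1 C\<^esub>"
      using sigma_inj[OF c] bd_carrier[of 2 c a] c a bd1_bd[OF c a] pi1_ident[OF c]
      by (simp add: Q1_def)
    finally show "sigma (ab_dn 2 C (injS (obj C) (cgrp C 3) c a)) = \<one>\<^bsub>Q1 C\<^esub>" by (simp add: inj_c_eq)
  qed
qed

lemma ab_dn_ab_dn: "2 \<le> n \<Longrightarrow> x \<in> carrier (Sn (Suc (Suc n)) C) \<Longrightarrow> ab_dn n C (ab_dn (Suc n) C x) = \<one>\<^bsub>Sn n C\<^esub>"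
  by (auto simp: ab_dn_def Sn_one fun_eq_iff bd_bd Sn_elem)

lemma Ab_chain: "chain_complex Ab"
  unfolding chain_complex_def
proof (intro conjI allI ballI)
  fix n show "comm_group (cgr Ab n)" by (rule Ab_comm)
next
  fix n show "dif Ab n \<in> hom (cgr Ab (Suc n)) (cgr Ab n)" by (rule dif_hom)
next
  fix n y assume y: "y \<in> carrier (cgr Ab (Suc (Suc n)))"
  then obtain X where X: "X \<in> carrier (Qn (Suc (Suc n)) C)" "y = Inr (Inr X)" by (auto simp: carn)
  then obtain x where x: "x \<in> carrier (Sn (Suc (Suc n)) C)" "X = \<pi>n (Suc (Suc n)) x"
    by (auto simp: Qn_def carrier_FactGroup)
  show "dif Ab n (dif Ab (Suc n) y) = \<one>\<^bsub>cgr Ab n\<^esub>"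
  proof (cases n)
    case 0
    have x2: "x \<in> carrier (Sn 2 C)" using x 0 by (simp add: numeral_2_eq_2)
    have "dif Ab (Suc 0) y = Inr (Inl (sigma x))"
      using X x 0 phi1_val[OF x2] by (simp add: dif1 numeral_2_eq_2)
    moreover have "dif Ab 0 (Inr (Inl (sigma x))) = Inl 0"
      using sigma_eq[OF x2] phi0_val[OF ab_d1_carrier[OF x2]] ab_d0_ab_d1[OF x2] by (simp add: dif0)
    ultimately show ?thesis using 0 by (simp add: one0)
  next
    case (Suc m)
    show ?thesis
    proof (cases m)
      case 0
      have x3: "x \<in> carrier (Sn 3 C)" using x Suc 0 by (simp add: numeral_3_eq_3)
      have "dif Ab (Suc (Suc 0)) y = Inr (Inr (\<pi>n 2 (ab_dn 2 C x)))"
        using X x Suc 0 phin_val[of 2 x] x3 by (simp add: difn numeral_2_eq_2 numeral_3_eq_3)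
      moreover have "dif Ab (Suc 0) (Inr (Inr (\<pi>n 2 (ab_dn 2 C x)))) = Inr (Inl (N1 C))"
        using phi1_val[OF hom_carrier'[OF ab_dn_hom[of 2] x3[unfolded numeral_3_eq_3 numeral_2_eq_2[symmetric]]]]
           sigma_ab_dn[OF x3] by (simp add: dif1 Q1_def)
      ultimately show ?thesis using Suc 0 by (simp add: one1)
    next
      case (Suc k)
      have n2: "2 \<le> n" using \<open>n = Suc m\<close> Suc by simp
      have "dif Ab (Suc n) y = Inr (Inr (\<pi>n (Suc n) (ab_dn (Suc n) C x)))"
        using X x n2 phin_val[of "Suc n" x] \<open>n = Suc m\<close> by (simp add: difn)
      moreover have "dif Ab n (Inr (Inr (\<pi>n (Suc n) (ab_dn (Suc n) C x)))) = Inr (Inr (Nn n C))"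
      proof -
        have n2': "2 \<le> Suc n" using n2 by simp
        have "ab_dn (Suc n) C x \<in> carrier (Sn (Suc n) C)" using hom_carrier'[OF ab_dn_hom[OF n2'] x(1)] .
        then have "phin n (\<pi>n (Suc n) (ab_dn (Suc n) C x)) = \<pi>n n \<one>\<^bsub>Sn n C\<^esub>"
          using phin_val[OF n2] ab_dn_ab_dn[OF n2 x(1)] by simp
        also have "\<dots> = Nn n C"
          using group.coset_mult_one[OF Sn_group[OF n2] subgroup.subset[OF Nn_subgroup[OF n2]]] .
        finally show ?thesis using \<open>n = Suc m\<close> Suc by (simp add: difn)
      qed
      ultimately show ?thesis using \<open>n = Suc m\<close> Suc by (simp add: onen)
    qed
  qed
qed

end

context xc begin

lemma unit_simps:
  "mo (cr_unit C) c = Inl (frag_of c)"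
  "mm (cr_unit C) l = (Inl (frag_of (src C l)), Inr (Inl (\<pi>1 (frag_of l))))"
  "me (cr_unit C) n c x = Inr (Inr (\<pi>n n (inj_c n C c x)))"
  by (simp_all add: cr_unit_def)

lemma Z0_frag: "frag_of c \<in> carrier (Z0 C) \<longleftrightarrow> c \<in> obj C" by (simp add: Z0_carrier)

lemma unit_me_hom: assumes n: "2 \<le> n" and c: "c \<in> obj C"
  shows "(\<lambda>x. Inr (Inr (\<pi>n n (inj_c n C c x)))) \<in> hom (cgrp C n c) (cgr Ab n)"
proof -
  obtain m where m: "n = Suc (Suc m)" using n by (metis add_2_eq_Suc le_Suc_ex)
  have eq: "(\<lambda>x. Inr (Inr (\<pi>n n (inj_c n C c x)))) = (Inr \<circ> Inr) \<circ> ((\<lambda>x. \<pi>n n x) \<circ> inj_c n C c)"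
    by (rule ext) simp
  have "(\<lambda>x. Inr (Inr (\<pi>n n (inj_c n C c x)))) \<in> hom (cgrp C n c) (transport (Inr \<circ> Inr) (Qn n C))"
    unfolding eq
    by (rule hom_compose[OF hom_compose[OF inj_c_hom[OF n c] pin_hom[OF n]] transport_hom_in[OF inj_InrInr]])
  then show ?thesis using m by (simp only: cgrn)
qed

lemma unit_morphism: "cr_morphism C (U_Cr Ab) (cr_unit C)"
  unfolding cr_morphism_def
proof (intro conjI ballI allI impI)
  fix c assume c: "c \<in> obj C"
  then show "mo (cr_unit C) c \<in> obj (U_Cr Ab)" by (simp add: unit_simps U_Cr_simps car0 Z0_frag)
next
  fix l assume l: "l \<in> arr C"
  have st: "src C l \<in> obj C" "tgt C l \<in> obj C" using st_obj l by auto
  have c1: "\<pi>1 (frag_of l) \<in> carrier (Q1 C)" using l by (simp add: pi1_carrier frag_arr)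
  have "dif Ab 0 (Inr (Inl (\<pi>1 (frag_of l)))) = Inl (frag_of (tgt C l) - frag_of (src C l))"
    using l by (simp add: dif0 phi0_val frag_arr ab_d0_of)
  then have "tgt (U_Cr Ab) (mm (cr_unit C) l) = Inl (frag_of (src C l) + (frag_of (tgt C l) - frag_of (src C l)))"
    using st by (simp add: unit_simps U_Cr_simps mult0 Z0_frag Z0_diff_carrier)
  then show "tgt (U_Cr Ab) (mm (cr_unit C) l) = mo (cr_unit C) (tgt C l)"
    using st c1 by (simp add: unit_simps U_Cr_simps car0 car1 Z0_frag)
  show "mm (cr_unit C) l \<in> arr (U_Cr Ab)"
    using st c1 by (simp add: unit_simps U_Cr_simps car0 car1 Z0_frag)
  show "src (U_Cr Ab) (mm (cr_unit C) l) = mo (cr_unit C) (src C l)"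
    using st c1 by (simp add: unit_simps U_Cr_simps car0 car1 Z0_frag)
next
  fix f g assume f: "f \<in> arr C" and g: "g \<in> arr C" and fg: "tgt C f = src C g"
  show "mm (cr_unit C) (comp C g f) = comp (U_Cr Ab) (mm (cr_unit C) g) (mm (cr_unit C) f)"
    using comp_props[OF f g fg] pi1_comp[OF f g fg] f g
    by (simp add: unit_simps U_Cr_simps mult1 pi1_carrier frag_arr)
next
  fix c assume c: "c \<in> obj C"
  show "mm (cr_unit C) (ident C c) = ident (U_Cr Ab) (mo (cr_unit C) c)"
    using c ident_props[OF c] pi1_ident[OF c] by (simp add: unit_simps U_Cr_simps one1)
next
  fix n :: nat and c assume n: "2 \<le> n" and c: "c \<in> obj C"
  show "me (cr_unit C) n c \<in> hom (cgrp C n c) (cgrp (U_Cr Ab) n (mo (cr_unit C) c))"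
    using unit_me_hom[OF n c] by (simp add: U_Cr_simps unit_simps[abs_def])
next
  fix n :: nat and l x assume n: "2 \<le> n" and l: "l \<in> arr C" and x: "x \<in> carrier (cgrp C n (src C l))"
  show "me (cr_unit C) n (tgt C l) (act C n l x) = act (U_Cr Ab) n (mm (cr_unit C) l) (me (cr_unit C) n (src C l) x)"
    using inj_act_eq[OF n l x] by (simp add: U_Cr_simps unit_simps)
next
  fix c x assume c: "c \<in> obj C" and x: "x \<in> carrier (cgrp C 2 c)"
  have "dif Ab (Suc 0) (Inr (Inr (\<pi>n 2 (inj_c 2 C c x)))) = Inr (Inl (Phi c x))"
    using phi1_val[OF inj_c_carrier[OF _ c x]] sigma_inj[OF c x] by (simp add: dif1)
  then show "mm (cr_unit C) (bd1 C c x) = bd1 (U_Cr Ab) (mo (cr_unit C) c) (me (cr_unit C) 2 c x)"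
    using bd1_props[OF c x] by (simp add: U_Cr_simps unit_simps)
next
  fix n :: nat and c x assume n: "2 \<le> n" and c: "c \<in> obj C" and x: "x \<in> carrier (cgrp C (Suc n) c)"
  obtain m where m: "n = Suc (Suc m)" using n by (metis add_2_eq_Suc le_Suc_ex)
  have n': "2 \<le> Suc n" using n by simp
  have "dif Ab n (Inr (Inr (\<pi>n (Suc n) (inj_c (Suc n) C c x)))) = Inr (Inr (\<pi>n n (inj_c n C c (bd C n c x))))"
    using phin_val[OF n inj_c_carrier[OF n' c x]] ab_dn_inj[OF n c x] m by (simp add: difn)
  then show "me (cr_unit C) n c (bd C n c x) = bd (U_Cr Ab) n (mo (cr_unit C) c) (me (cr_unit C) (Suc n) c x)"
    by (simp add: U_Cr_simps unit_simps)
qed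

end

locale xcm = xc C for C :: "('o, 'm, 'e) crossed_cx" +
  fixes A :: "'a chain_cx" and F :: "('o, 'm, 'e, 'a, 'a \<times> 'a, 'a) cr_mor"
  assumes A: "chain_complex A" and F: "cr_morphism C (U_Cr A) F"
begin

lemma cgA: "comm_group (cgr A n)" using chain_facts[OF A] by blast
lemma gA: "group (cgr A n)" using cgA by (simp add: comm_group.axioms(2))
lemma difA_hom: "dif A n \<in> hom (cgr A (Suc n)) (cgr A n)" using chain_facts[OF A] by blast

lemma mo_c: "c \<in> obj C \<Longrightarrow> mo F c \<in> carrier (cgr A 0)"
  using F by (auto simp: cr_morphism_def U_Cr_simps)
lemma mm_c: "l \<in> arr C \<Longrightarrow> snd (mm F l) \<in> carrier (cgr A (Suc 0))"
  using F by (auto simp: cr_morphism_def U_Cr_simps)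
lemma mm_src: "l \<in> arr C \<Longrightarrow> fst (mm F l) = mo F (src C l)"
  using F by (auto simp: cr_morphism_def U_Cr_simps)
lemma mm_pair: "l \<in> arr C \<Longrightarrow> mm F l = (mo F (src C l), snd (mm F l))"
  using mm_src by (metis prod.collapse)
lemma mm_tgt: "l \<in> arr C \<Longrightarrow> mo F (src C l) \<otimes>\<^bsub>cgr A 0\<^esub> dif A 0 (snd (mm F l)) = mo F (tgt C l)"
proof -
  assume l: "l \<in> arr C"
  have "tgt (U_Cr A) (mm F l) = mo F (tgt C l)" using F l by (simp add: cr_morphism_def)
  then show ?thesis using mm_pair[OF l] by (metis U_Cr_simps(4))
qed
lemma mm_comp: "f \<in> arr C \<Longrightarrow> g \<in> arr C \<Longrightarrow> tgt C f = src C g \<Longrightarrow>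
    snd (mm F (comp C g f)) = snd (mm F f) \<otimes>\<^bsub>cgr A (Suc 0)\<^esub> snd (mm F g)"
proof -
  assume fg: "f \<in> arr C" "g \<in> arr C" "tgt C f = src C g"
  have "mm F (comp C g f) = comp (U_Cr A) (mm F g) (mm F f)" using F fg by (simp add: cr_morphism_def)
  then show ?thesis using mm_pair[OF fg(1)] mm_pair[OF fg(2)] by (metis U_Cr_simps(5) snd_conv One_nat_def)
qed
lemma me_hom: "2 \<le> n \<Longrightarrow> c \<in> obj C \<Longrightarrow> me F n c \<in> hom (cgrp C n c) (cgr A n)"
  using F by (simp add: cr_morphism_def U_Cr_simps)
lemma me_act: "2 \<le> n \<Longrightarrow> l \<in> arr C \<Longrightarrow> x \<in> carrier (cgrp C n (src C l)) \<Longrightarrow>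
    me F n (tgt C l) (act C n l x) = me F n (src C l) x"
  using F by (simp add: cr_morphism_def U_Cr_simps)
lemma mm_bd1: "c \<in> obj C \<Longrightarrow> x \<in> carrier (cgrp C 2 c) \<Longrightarrow> snd (mm F (bd1 C c x)) = dif A (Suc 0) (me F 2 c x)"
  using F by (simp add: cr_morphism_def U_Cr_simps)
lemma me_bd: "2 \<le> n \<Longrightarrow> c \<in> obj C \<Longrightarrow> x \<in> carrier (cgrp C (Suc n) c) \<Longrightarrow>
    me F n c (bd C n c x) = dif A n (me F (Suc n) c x)"
  using F by (simp add: cr_morphism_def U_Cr_simps)

definition G0 where
  "G0 = (SOME h. h \<in> hom (Z0 C) (cgr A 0) \<and> (\<forall>c\<in>obj C. h (frag_of c) = mo F c))"

lemma G0_props: "G0 \<in> hom (Z0 C) (cgr A 0)" "c \<in> obj C \<Longrightarrow> G0 (frag_of c) = mo F c"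
proof -
  obtain h where h: "h \<in> hom (free_Abelian_group (obj C)) (cgr A 0)" "\<And>x. x \<in> obj C \<Longrightarrow> h (frag_of x) = mo F x"
    using comm_group.free_Abelian_group_universal[OF cgA, of "mo F" "obj C"] mo_c by blast
  then have "\<exists>h. h \<in> hom (Z0 C) (cgr A 0) \<and> (\<forall>c\<in>obj C. h (frag_of c) = mo F c)"
    by (auto simp: Z0_def)
  then have "G0 \<in> hom (Z0 C) (cgr A 0) \<and> (\<forall>c\<in>obj C. G0 (frag_of c) = mo F c)"
    unfolding G0_def by (rule someI_ex)
  then show "G0 \<in> hom (Z0 C) (cgr A 0)" "c \<in> obj C \<Longrightarrow> G0 (frag_of c) = mo F c" by auto
qed

definition G1 where
  "G1 = (SOME h. h \<in> hom (Z1 C) (cgr A (Suc 0)) \<and> (\<forall>l\<in>arr C. h (frag_of l) = snd (mm F l)))"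

lemma G1_props: "G1 \<in> hom (Z1 C) (cgr A (Suc 0))" "l \<in> arr C \<Longrightarrow> G1 (frag_of l) = snd (mm F l)"
proof -
  obtain h where h: "h \<in> hom (free_Abelian_group (arr C)) (cgr A (Suc 0))"
      "\<And>x. x \<in> arr C \<Longrightarrow> h (frag_of x) = snd (mm F x)"
    using comm_group.free_Abelian_group_universal[OF cgA, of "\<lambda>l. snd (mm F l)" "arr C"] mm_c by blast
  then have "\<exists>h. h \<in> hom (Z1 C) (cgr A (Suc 0)) \<and> (\<forall>l\<in>arr C. h (frag_of l) = snd (mm F l))"
    by (auto simp: Z1_def)
  then have "G1 \<in> hom (Z1 C) (cgr A (Suc 0)) \<and> (\<forall>l\<in>arr C. G1 (frag_of l) = snd (mm F l))"
    unfolding G1_def by (rule someI_ex)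
  then show "G1 \<in> hom (Z1 C) (cgr A (Suc 0))" "l \<in> arr C \<Longrightarrow> G1 (frag_of l) = snd (mm F l)" by auto
qed

lemma Z1_diff_mult: "a \<in> carrier (Z1 C) \<Longrightarrow> b \<in> carrier (Z1 C) \<Longrightarrow> a - b = a \<otimes>\<^bsub>Z1 C\<^esub> inv\<^bsub>Z1 C\<^esub> b"
  by (simp add: Z1_mult Z1_inv)
lemma Z0_diff_mult: "a \<in> carrier (Z0 C) \<Longrightarrow> b \<in> carrier (Z0 C) \<Longrightarrow> a - b = a \<otimes>\<^bsub>Z0 C\<^esub> inv\<^bsub>Z0 C\<^esub> b"
  by (simp add: Z0_mult Z0_inv)

lemma G1_diff: "a \<in> carrier (Z1 C) \<Longrightarrow> b \<in> carrier (Z1 C) \<Longrightarrow> G1 (a - b) = G1 a \<otimes>\<^bsub>cgr A (Suc 0)\<^esub> inv\<^bsub>cgr A (Suc 0)\<^esub> G1 b"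
  using Z1_diff_mult hom_mult'[OF G1_props(1)] hom_inv'[OF Z1_group gA G1_props(1)]
    group.inv_closed[OF Z1_group] by simp
lemma G0_diff: "a \<in> carrier (Z0 C) \<Longrightarrow> b \<in> carrier (Z0 C) \<Longrightarrow> G0 (a - b) = G0 a \<otimes>\<^bsub>cgr A 0\<^esub> inv\<^bsub>cgr A 0\<^esub> G0 b"
  using Z0_diff_mult hom_mult'[OF G0_props(1)] hom_inv'[OF Z0_group gA G0_props(1)]
    group.inv_closed[OF Z0_group] by simp

lemma G1_N1: "z \<in> N1 C \<Longrightarrow> G1 z = \<one>\<^bsub>cgr A (Suc 0)\<^esub>"
  unfolding N1_def'
proof (rule hom_generate_kernel[OF Z1_group gA G1_props(1) gens1_sub])
  interpret A1: comm_group "cgr A (Suc 0)" by (rule cgA)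
  fix s assume "s \<in> gens1"
  then obtain f g where fg: "f \<in> arr C" "g \<in> arr C" "tgt C f = src C g"
    and s: "s = frag_of (comp C g f) - frag_of g - frag_of f" by (auto simp: gens1_def)
  have cfg: "comp C g f \<in> arr C" using comp_props[OF fg] by simp
  have "G1 s = snd (mm F (comp C g f)) \<otimes>\<^bsub>cgr A (Suc 0)\<^esub> inv\<^bsub>cgr A (Suc 0)\<^esub> snd (mm F g)
      \<otimes>\<^bsub>cgr A (Suc 0)\<^esub> inv\<^bsub>cgr A (Suc 0)\<^esub> snd (mm F f)"
    using fg cfg by (simp add: s G1_diff frag_arr Z1_diff_carrier G1_props(2))
  also have "\<dots> = \<one>\<^bsub>cgr A (Suc 0)\<^esub>"
    using mm_comp[OF fg] mm_c[OF fg(1)] mm_c[OF fg(2)]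
    by (simp add: A1.m_assoc A1.m_comm[of "snd (mm F g)"] A1.inv_mult_group[symmetric])
  finally show "G1 s = \<one>\<^bsub>cgr A (Suc 0)\<^esub>" .
qed

definition psi1 where "psi1 X = G1 (SOME z. z \<in> X)"

lemma psi1_hom: "psi1 \<in> hom (Q1 C) (cgr A (Suc 0))"
  unfolding psi1_def Q1_def by (rule quot_hom[OF Z1_group N1_normal gA G1_props(1) G1_N1])

lemma psi1_val: "z \<in> carrier (Z1 C) \<Longrightarrow> psi1 (\<pi>1 z) = G1 z"
  unfolding psi1_def by (rule quot_val[OF Z1_group N1_subgroup gA G1_props(1) G1_N1])

definition Psi where "Psi n x = gfinprod (cgr A n) (\<lambda>p. me F n p (x p)) (obj C)"

lemma Psi_hom: "2 \<le> n \<Longrightarrow> Psi n \<in> hom (Sn n C) (cgr A n)"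
  unfolding Psi_def[abs_def] Sn_def
  by (rule hom_group_sum_injS[OF cgA]) (simp_all add: grp me_hom)

lemma Psi_inj: "2 \<le> n \<Longrightarrow> c \<in> obj C \<Longrightarrow> a \<in> carrier (cgrp C n c) \<Longrightarrow> Psi n (inj_c n C c a) = me F n c a"
  unfolding Psi_def inj_c_eq
  by (rule gfinprod_injS[OF cgA, where f = "\<lambda>p. me F n p"]) (simp_all add: grp me_hom)

lemma Psi_N: assumes n: "2 \<le> n" and x: "x \<in> Nn n C" shows "Psi n x = \<one>\<^bsub>cgr A n\<^esub>"
proof -
  have x': "x \<in> generate (Sn n C) (gensN n)" using x by (simp add: Nn_def')
  show ?thesis
  proof (rule hom_generate_kernel[OF Sn_group[OF n] gA Psi_hom[OF n] gensN_sub[OF n] _ x'])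
    interpret An: comm_group "cgr A n" by (rule cgA)
    fix s assume "s \<in> gensN n"
    then obtain l b where lb: "l \<in> arr C" "b \<in> carrier (cgrp C n (src C l))"
      and s: "s = inj_c n C (tgt C l) (act C n l b) \<otimes>\<^bsub>Sn n C\<^esub> inv\<^bsub>Sn n C\<^esub> (inj_c n C (src C l) b)"
      by (auto simp: gensN_def)
    have st: "src C l \<in> obj C" "tgt C l \<in> obj C" using st_obj lb by auto
    have ac: "act C n l b \<in> carrier (cgrp C n (tgt C l))" using act_carrier[OF n lb] .
    have i1: "inj_c n C (tgt C l) (act C n l b) \<in> carrier (Sn n C)" using inj_c_carrier[OF n st(2) ac] .
    have i2: "inj_c n C (src C l) b \<in> carrier (Sn n C)" using inj_c_carrier[OF n st(1) lb(2)] .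
    have "Psi n s = Psi n (inj_c n C (tgt C l) (act C n l b)) \<otimes>\<^bsub>cgr A n\<^esub> inv\<^bsub>cgr A n\<^esub> Psi n (inj_c n C (src C l) b)"
      using s hom_mult'[OF Psi_hom[OF n]] hom_inv'[OF Sn_group[OF n] gA Psi_hom[OF n]] i1 i2
        group.inv_closed[OF Sn_group[OF n]] by simp
    also have "\<dots> = me F n (src C l) b \<otimes>\<^bsub>cgr A n\<^esub> inv\<^bsub>cgr A n\<^esub> me F n (src C l) b"
      using Psi_inj[OF n st(2) ac] Psi_inj[OF n st(1) lb(2)] me_act[OF n lb] by simp
    also have "\<dots> = \<one>\<^bsub>cgr A n\<^esub>" using hom_carrier'[OF me_hom[OF n st(1)] lb(2)] by simp
    finally show "Psi n s = \<one>\<^bsub>cgr A n\<^esub>" .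
  qed
qed

definition psin where "psin n X = Psi n (SOME x. x \<in> X)"

lemma psin_hom: "2 \<le> n \<Longrightarrow> psin n \<in> hom (Qn n C) (cgr A n)"
  unfolding psin_def[abs_def] Qn_def by (rule quot_hom[OF Sn_group Nn_normal gA Psi_hom Psi_N])

lemma psin_val: "2 \<le> n \<Longrightarrow> x \<in> carrier (Sn n C) \<Longrightarrow> psin n (\<pi>n n x) = Psi n x"
  unfolding psin_def by (rule quot_val[OF Sn_group Nn_subgroup gA Psi_hom Psi_N])

definition gmap :: "nat \<Rightarrow> ('o, 'm, 'e) ab_elt \<Rightarrow> 'a" where
  "gmap n y = (case y of Inl z \<Rightarrow> G0 z | Inr (Inl X) \<Rightarrow> psi1 X | Inr (Inr X) \<Rightarrow> psin n X)"

end

context xcm begin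

lemma gmap_hom: "gmap n \<in> hom (cgr Ab n) (cgr A n)"
proof (cases n)
  case 0
  show ?thesis unfolding 0 cgr0
    by (rule transport_hom_out[OF inj_Inl Z0_group G0_props(1)]) (simp add: gmap_def)
next
  case (Suc m) then show ?thesis
  proof (cases m)
    case 0 show ?thesis unfolding Suc 0 cgr1
      by (rule transport_hom_out[OF inj_InrInl Q1_group psi1_hom]) (simp add: gmap_def)
  next
    case (Suc k) show ?thesis unfolding \<open>n = Suc m\<close> Suc cgrn
      by (rule transport_hom_out[OF inj_InrInr Qn_group psin_hom]) (simp_all add: gmap_def)
  qed
qed

lemma key0: assumes z: "z \<in> carrier (Z1 C)" shows "G0 (ab_d0 C z) = dif A 0 (G1 z)"
proof -
  interpret A0: comm_group "cgr A 0" by (rule cgA)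
  have e1: "(\<lambda>z. G0 (ab_d0 C z)) = G0 \<circ> ab_d0 C" by (rule ext) simp
  have h1: "(\<lambda>z. G0 (ab_d0 C z)) \<in> hom (free_Abelian_group (arr C)) (cgr A 0)"
    unfolding e1 using hom_compose[OF ab_d0_hom G0_props(1)] by (simp add: Z1_def)
  have e2: "(\<lambda>z. dif A 0 (G1 z)) = dif A 0 \<circ> G1" by (rule ext) simp
  have h2: "(\<lambda>z. dif A 0 (G1 z)) \<in> hom (free_Abelian_group (arr C)) (cgr A 0)"
    unfolding e2 using hom_compose[OF G1_props(1) difA_hom[of 0]] by (simp add: Z1_def)
  show ?thesis
  proof (rule free_hom_unique[OF gA h1 h2])
    show "z \<in> carrier (free_Abelian_group (arr C))" using z by (simp add: Z1_def)
  next
    fix l assume l: "l \<in> arr C"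
    have st: "src C l \<in> obj C" "tgt C l \<in> obj C" using st_obj l by auto
    have ms: "mo F (src C l) \<in> carrier (cgr A 0)" using mo_c st by simp
    have d: "dif A 0 (snd (mm F l)) \<in> carrier (cgr A 0)"
      using hom_carrier'[OF difA_hom mm_c[OF l]] by simp
    have "G0 (ab_d0 C (frag_of l)) = mo F (tgt C l) \<otimes>\<^bsub>cgr A 0\<^esub> inv\<^bsub>cgr A 0\<^esub> mo F (src C l)"
      using st by (simp add: ab_d0_of G0_diff Z0_frag G0_props(2))
    also have "\<dots> = mo F (src C l) \<otimes>\<^bsub>cgr A 0\<^esub> dif A 0 (snd (mm F l)) \<otimes>\<^bsub>cgr A 0\<^esub> inv\<^bsub>cgr A 0\<^esub> mo F (src C l)"
      using mm_tgt[OF l] by simp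
    also have "\<dots> = dif A 0 (snd (mm F l)) \<otimes>\<^bsub>cgr A 0\<^esub> mo F (src C l) \<otimes>\<^bsub>cgr A 0\<^esub> inv\<^bsub>cgr A 0\<^esub> mo F (src C l)"
      using ms d by (simp add: A0.m_comm)
    also have "\<dots> = dif A 0 (snd (mm F l))"
      using ms d by (simp add: A0.m_assoc)
    also have "\<dots> = dif A 0 (G1 (frag_of l))" using G1_props(2)[OF l] by simp
    finally show "G0 (ab_d0 C (frag_of l)) = dif A 0 (G1 (frag_of l))" .
  qed
qed

lemma key1: assumes x: "x \<in> carrier (Sn 2 C)" shows "psi1 (sigma x) = dif A (Suc 0) (Psi 2 x)"
proof -
  have dh1: "dif A (Suc 0) \<in> hom (cgr A 2) (cgr A (Suc 0))"
    using difA_hom[of "Suc 0"] by (simp add: numeral_2_eq_2)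
  have e1: "(\<lambda>x. psi1 (sigma x)) = psi1 \<circ> sigma" by (rule ext) simp
  have h1: "(\<lambda>x. psi1 (sigma x)) \<in> hom (Sn 2 C) (cgr A (Suc 0))"
    unfolding e1 by (rule hom_compose[OF sigma_hom psi1_hom])
  have e2: "(\<lambda>x. dif A (Suc 0) (Psi 2 x)) = dif A (Suc 0) \<circ> Psi 2" by (rule ext) simp
  have h2: "(\<lambda>x. dif A (Suc 0) (Psi 2 x)) \<in> hom (Sn 2 C) (cgr A (Suc 0))"
    unfolding e2 by (rule hom_compose[OF Psi_hom dh1]) simp
  show ?thesis
  proof (rule sum_hom_unique[of "obj C" "cgrp C 2" "cgr A (Suc 0)", folded Sn_def, OF _ gA h1 h2 _ x])
    show "\<And>i. i \<in> obj C \<Longrightarrow> group (cgrp C 2 i)" by (simp add: grp)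
  next
    fix c a assume c: "c \<in> obj C" and a: "a \<in> carrier (cgrp C 2 c)"
    have "psi1 (sigma (inj_c 2 C c a)) = dif A (Suc 0) (Psi 2 (inj_c 2 C c a))"
      using sigma_inj[OF c a] Psi_inj[OF _ c a] psi1_val[OF frag_arr[OF bd1_props(1)[OF c a]]]
        G1_props(2)[OF bd1_props(1)[OF c a]] mm_bd1[OF c a] by simp
    then show "psi1 (sigma (injS (obj C) (cgrp C 2) c a)) = dif A (Suc 0) (Psi 2 (injS (obj C) (cgrp C 2) c a))"
      by (simp add: inj_c_eq)
  qed
qed

lemma keyn: assumes n: "2 \<le> n" and x: "x \<in> carrier (Sn (Suc n) C)"
  shows "Psi n (ab_dn n C x) = dif A n (Psi (Suc n) x)"
proof -
  have n': "2 \<le> Suc n" using n by simp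
  have e1: "(\<lambda>x. Psi n (ab_dn n C x)) = Psi n \<circ> ab_dn n C" by (rule ext) simp
  have h1: "(\<lambda>x. Psi n (ab_dn n C x)) \<in> hom (Sn (Suc n) C) (cgr A n)"
    unfolding e1 by (rule hom_compose[OF ab_dn_hom[OF n] Psi_hom[OF n]])
  have e2: "(\<lambda>x. dif A n (Psi (Suc n) x)) = dif A n \<circ> Psi (Suc n)" by (rule ext) simp
  have h2: "(\<lambda>x. dif A n (Psi (Suc n) x)) \<in> hom (Sn (Suc n) C) (cgr A n)"
    unfolding e2 by (rule hom_compose[OF Psi_hom[OF n'] difA_hom])
  show ?thesis
  proof (rule sum_hom_unique[of "obj C" "cgrp C (Suc n)" "cgr A n", folded Sn_def, OF _ gA h1 h2 _ x])
    show "\<And>i. i \<in> obj C \<Longrightarrow> group (cgrp C (Suc n) i)" using n' by (simp add: grp)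
  next
    fix c a assume c: "c \<in> obj C" and a: "a \<in> carrier (cgrp C (Suc n) c)"
    have "Psi n (ab_dn n C (inj_c (Suc n) C c a)) = dif A n (Psi (Suc n) (inj_c (Suc n) C c a))"
      using ab_dn_inj[OF n c a] Psi_inj[OF n c bd_carrier[OF n c a]] Psi_inj[OF n' c a] me_bd[OF n c a] by simp
    then show "Psi n (ab_dn n C (injS (obj C) (cgrp C (Suc n)) c a)) = dif A n (Psi (Suc n) (injS (obj C) (cgrp C (Suc n)) c a))"
      by (simp add: inj_c_eq)
  qed
qed

lemma gmap_chain: "chain_map Ab A gmap"
  unfolding chain_map_def
proof (intro conjI allI ballI)
  fix n show "gmap n \<in> hom (cgr Ab n) (cgr A n)" by (rule gmap_hom)
next
  fix n y assume y: "y \<in> carrier (cgr Ab (Suc n))"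
  show "gmap n (dif Ab n y) = dif A n (gmap (Suc n) y)"
  proof (cases n)
    case 0
    then obtain X where X: "X \<in> carrier (Q1 C)" "y = Inr (Inl X)" using y by (auto simp: car1)
    then obtain z where z: "z \<in> carrier (Z1 C)" "X = \<pi>1 z" by (auto simp: Q1_def carrier_FactGroup)
    show ?thesis using 0 X z key0[OF z(1)] by (simp add: dif0 gmap_def phi0_val psi1_val)
  next
    case (Suc m)
    show ?thesis
    proof (cases m)
      case 0
      obtain X where X: "X \<in> carrier (Qn 2 C)" "y = Inr (Inr X)" using y Suc 0 by (auto simp: carn Qn2)
      then obtain x where x: "x \<in> carrier (Sn 2 C)" "X = \<pi>n 2 x" by (auto simp: Qn_def carrier_FactGroup)
      have "gmap (Suc 0) (dif Ab (Suc 0) y) = psi1 (sigma x)"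
        using X x by (simp add: dif1 gmap_def phi1_val)
      moreover have "gmap (Suc (Suc 0)) y = Psi 2 x"
        using X x psin_val[of 2 x] by (simp add: gmap_def numeral_2_eq_2)
      ultimately show ?thesis using Suc 0 key1[OF x(1)] by simp
    next
      case (Suc k)
      have n2: "2 \<le> n" using \<open>n = Suc m\<close> Suc by simp
      obtain X where X: "X \<in> carrier (Qn (Suc n) C)" "y = Inr (Inr X)" using y \<open>n = Suc m\<close> by (auto simp: carn)
      then obtain x where x: "x \<in> carrier (Sn (Suc n) C)" "X = \<pi>n (Suc n) x" by (auto simp: Qn_def carrier_FactGroup)
      have "dif Ab n y = Inr (Inr (\<pi>n n (ab_dn n C x)))"
        using X x phin_val[OF n2 x(1)] \<open>n = Suc m\<close> Suc by (simp add: difn)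
      then have "gmap n (dif Ab n y) = Psi n (ab_dn n C x)"
        using psin_val[OF n2 hom_carrier'[OF ab_dn_hom[OF n2] x(1)]] by (simp add: gmap_def)
      moreover have "gmap (Suc n) y = Psi (Suc n) x"
        using X x psin_val[of "Suc n" x] n2 by (simp add: gmap_def)
      ultimately show ?thesis using keyn[OF n2 x(1)] by simp
    qed
  qed
qed

lemma cr_mor_eq_iff:
  "cr_mor_eq C (cr_mor_comp (U_mor g) (cr_unit C)) F \<longleftrightarrow>
    (\<forall>c\<in>obj C. g 0 (Inl (frag_of c)) = mo F c) \<and>
    (\<forall>l\<in>arr C. g 0 (Inl (frag_of (src C l))) = fst (mm F l) \<and> g (Suc 0) (Inr (Inl (\<pi>1 (frag_of l)))) = snd (mm F l)) \<and>
    (\<forall>n\<ge>2. \<forall>c\<in>obj C. \<forall>x\<in>carrier (cgrp C n c). g n (Inr (Inr (\<pi>n n (inj_c n C c x)))) = me F n c x)"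
  by (auto simp: cr_mor_eq_def cr_mor_comp_def U_mor_def unit_simps prod_eq_iff)

lemma gmap_eq: "cr_mor_eq C (cr_mor_comp (U_mor gmap) (cr_unit C)) F"
  unfolding cr_mor_eq_iff
proof (intro conjI ballI allI impI)
  fix c assume c: "c \<in> obj C"
  then show "gmap 0 (Inl (frag_of c)) = mo F c" by (simp add: gmap_def G0_props)
next
  fix l assume l: "l \<in> arr C"
  show "gmap 0 (Inl (frag_of (src C l))) = fst (mm F l)"
    using l st_obj by (simp add: gmap_def G0_props mm_src)
  show "gmap (Suc 0) (Inr (Inl (\<pi>1 (frag_of l)))) = snd (mm F l)"
    using l by (simp add: gmap_def psi1_val frag_arr G1_props)
next
  fix n :: nat and c x assume n: "2 \<le> n" and c: "c \<in> obj C" and x: "x \<in> carrier (cgrp C n c)"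
  show "gmap n (Inr (Inr (\<pi>n n (inj_c n C c x)))) = me F n c x"
    using psin_val[OF n inj_c_carrier[OF n c x]] Psi_inj[OF n c x] by (simp add: gmap_def)
qed

lemma uniq:
  assumes g: "chain_map Ab A g" and ge: "cr_mor_eq C (cr_mor_comp (U_mor g) (cr_unit C)) F"
    and g': "chain_map Ab A g'" and ge': "cr_mor_eq C (cr_mor_comp (U_mor g') (cr_unit C)) F"
    and y: "y \<in> carrier (cgr Ab n)"
  shows "g n y = g' n y"
proof -
  have gh: "\<And>n. g n \<in> hom (cgr Ab n) (cgr A n)" using g by (simp add: chain_map_def)
  have gh': "\<And>n. g' n \<in> hom (cgr Ab n) (cgr A n)" using g' by (simp add: chain_map_def)
  note E = ge[unfolded cr_mor_eq_iff] and E' = ge'[unfolded cr_mor_eq_iff]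
  show ?thesis
  proof (cases n)
    case 0
    obtain z where z: "z \<in> carrier (Z0 C)" "y = Inl z" using y 0 by (auto simp: car0)
    have h: "(\<lambda>z. g 0 (Inl z)) \<in> hom (free_Abelian_group (obj C)) (cgr A 0)"
      using transport_hom_comp[OF inj_Inl, of "g 0" "Z0 C"] gh[of 0] by (simp add: cgr0 Z0_def)
    have h': "(\<lambda>z. g' 0 (Inl z)) \<in> hom (free_Abelian_group (obj C)) (cgr A 0)"
      using transport_hom_comp[OF inj_Inl, of "g' 0" "Z0 C"] gh'[of 0] by (simp add: cgr0 Z0_def)
    have "g 0 (Inl z) = g' 0 (Inl z)"
      by (rule free_hom_unique[OF gA h h']) (use E E' z in \<open>auto simp: Z0_def\<close>)
    then show ?thesis using 0 z by simp
  next
    case (Suc m)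
    show ?thesis
    proof (cases m)
      case 0
      obtain X where X: "X \<in> carrier (Q1 C)" "y = Inr (Inl X)" using y Suc 0 by (auto simp: car1)
      then obtain z where z: "z \<in> carrier (Z1 C)" "X = \<pi>1 z" by (auto simp: Q1_def carrier_FactGroup)
      have t: "(\<lambda>X. g (Suc 0) (Inr (Inl X))) \<in> hom (Q1 C) (cgr A (Suc 0))"
        using transport_hom_comp[OF inj_InrInl, of "g (Suc 0)" "Q1 C"] gh[of "Suc 0"] by (simp add: cgr1)
      have t': "(\<lambda>X. g' (Suc 0) (Inr (Inl X))) \<in> hom (Q1 C) (cgr A (Suc 0))"
        using transport_hom_comp[OF inj_InrInl, of "g' (Suc 0)" "Q1 C"] gh'[of "Suc 0"] by (simp add: cgr1)
      have e1: "(\<lambda>z. g (Suc 0) (Inr (Inl (\<pi>1 z)))) = (\<lambda>X. g (Suc 0) (Inr (Inl X))) \<circ> (\<lambda>z. \<pi>1 z)" by (rule ext) simp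
      have e2: "(\<lambda>z. g' (Suc 0) (Inr (Inl (\<pi>1 z)))) = (\<lambda>X. g' (Suc 0) (Inr (Inl X))) \<circ> (\<lambda>z. \<pi>1 z)" by (rule ext) simp
      have h: "(\<lambda>z. g (Suc 0) (Inr (Inl (\<pi>1 z)))) \<in> hom (free_Abelian_group (arr C)) (cgr A (Suc 0))"
        unfolding e1 using hom_compose[OF pi1_hom t] by (simp add: Z1_def)
      have h': "(\<lambda>z. g' (Suc 0) (Inr (Inl (\<pi>1 z)))) \<in> hom (free_Abelian_group (arr C)) (cgr A (Suc 0))"
        unfolding e2 using hom_compose[OF pi1_hom t'] by (simp add: Z1_def)
      have "g (Suc 0) (Inr (Inl (\<pi>1 z))) = g' (Suc 0) (Inr (Inl (\<pi>1 z)))"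
        by (rule free_hom_unique[OF gA h h']) (use E E' z in \<open>auto simp: Z1_def\<close>)
      then show ?thesis using Suc 0 X z by simp
    next
      case (Suc k)
      have n2: "2 \<le> n" using \<open>n = Suc m\<close> Suc by simp
      obtain X where X: "X \<in> carrier (Qn n C)" "y = Inr (Inr X)" using y \<open>n = Suc m\<close> Suc by (auto simp: carn)
      then obtain x where x: "x \<in> carrier (Sn n C)" "X = \<pi>n n x" by (auto simp: Qn_def carrier_FactGroup)
      have cn: "cgr Ab n = transport (Inr \<circ> Inr) (Qn n C)" using \<open>n = Suc m\<close> Suc by (simp add: cgrn)
      have t: "(\<lambda>X. g n (Inr (Inr X))) \<in> hom (Qn n C) (cgr A n)"
        using transport_hom_comp[OF inj_InrInr, of "g n" "Qn n C"] gh[of n] by (simp add: cn)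
      have t': "(\<lambda>X. g' n (Inr (Inr X))) \<in> hom (Qn n C) (cgr A n)"
        using transport_hom_comp[OF inj_InrInr, of "g' n" "Qn n C"] gh'[of n] by (simp add: cn)
      have e1: "(\<lambda>x. g n (Inr (Inr (\<pi>n n x)))) = (\<lambda>X. g n (Inr (Inr X))) \<circ> (\<lambda>x. \<pi>n n x)" by (rule ext) simp
      have e2: "(\<lambda>x. g' n (Inr (Inr (\<pi>n n x)))) = (\<lambda>X. g' n (Inr (Inr X))) \<circ> (\<lambda>x. \<pi>n n x)" by (rule ext) simp
      have h: "(\<lambda>x. g n (Inr (Inr (\<pi>n n x)))) \<in> hom (Sn n C) (cgr A n)"
        unfolding e1 by (rule hom_compose[OF pin_hom[OF n2] t])
      have h': "(\<lambda>x. g' n (Inr (Inr (\<pi>n n x)))) \<in> hom (Sn n C) (cgr A n)"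
        unfolding e2 by (rule hom_compose[OF pin_hom[OF n2] t'])
      have "g n (Inr (Inr (\<pi>n n x))) = g' n (Inr (Inr (\<pi>n n x)))"
      proof (rule sum_hom_unique[of "obj C" "cgrp C n" "cgr A n", folded Sn_def, OF _ gA h h' _ x(1)])
        show "\<And>i. i \<in> obj C \<Longrightarrow> group (cgrp C n i)" using n2 by (simp add: grp)
      next
        fix c a assume c: "c \<in> obj C" and a: "a \<in> carrier (cgrp C n c)"
        show "g n (Inr (Inr (\<pi>n n (injS (obj C) (cgrp C n) c a)))) = g' n (Inr (Inr (\<pi>n n (injS (obj C) (cgrp C n) c a))))"
          using E E' n2 c a by (simp add: inj_c_eq)
      qed
      then show ?thesis using X x by simp
    qed
  qed
qed

end

theorem mainTheorem5:
  shows "(\<forall>A :: 'a chain_cx. chain_complex A \<longrightarrow> crossed_complex (U_Cr A)) \<and>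
    (\<forall>(A :: 'a chain_cx) (B :: 'b chain_cx) g. chain_complex A \<and> chain_complex B \<and> chain_map A B g
        \<longrightarrow> cr_morphism (U_Cr A) (U_Cr B) (U_mor g)) \<and>
    (\<forall>C :: ('o, 'm, 'e) crossed_cx. crossed_complex C \<longrightarrow>
       chain_complex (Ab_Cr C) \<and>
       cr_morphism C (U_Cr (Ab_Cr C)) (cr_unit C) \<and>
       (\<forall>(A :: 'a chain_cx) F. chain_complex A \<and> cr_morphism C (U_Cr A) F \<longrightarrow>
          (\<exists>g. chain_map (Ab_Cr C) A g \<and> cr_mor_eq C (cr_mor_comp (U_mor g) (cr_unit C)) F) \<and>
          (\<forall>g g'. chain_map (Ab_Cr C) A g \<and> cr_mor_eq C (cr_mor_comp (U_mor g) (cr_unit C)) F \<and>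
                  chain_map (Ab_Cr C) A g' \<and> cr_mor_eq C (cr_mor_comp (U_mor g') (cr_unit C)) F \<longrightarrow>
                  (\<forall>n. \<forall>x\<in>carrier (cgr (Ab_Cr C) n). g n x = g' n x))))"
proof (intro conjI allI impI)
  fix A :: "'a chain_cx" assume "chain_complex A"
  then show "crossed_complex (U_Cr A)" by (rule U_Cr_crossed)
next
  fix A :: "'a chain_cx" and B :: "'b chain_cx" and g :: "nat \<Rightarrow> 'a \<Rightarrow> 'b"
  assume "chain_complex A \<and> chain_complex B \<and> chain_map A B g"
  then show "cr_morphism (U_Cr A) (U_Cr B) (U_mor g)" using U_mor_morphism by blast
next
  fix C :: "('o, 'm, 'e) crossed_cx" assume "crossed_complex C"
  then show "chain_complex (Ab_Cr C)" using xc.Ab_chain xc.intro by blast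
next
  fix C :: "('o, 'm, 'e) crossed_cx" assume "crossed_complex C"
  then show "cr_morphism C (U_Cr (Ab_Cr C)) (cr_unit C)" using xc.unit_morphism xc.intro by blast
next
  fix C :: "('o, 'm, 'e) crossed_cx" and A :: "'a chain_cx" and F :: "('o, 'm, 'e, 'a, 'a \<times> 'a, 'a) cr_mor"
  assume cc: "crossed_complex C" and AF: "chain_complex A \<and> cr_morphism C (U_Cr A) F"
  have x: "xcm C A F" by (rule xcm.intro[OF xc.intro[OF cc]]) (use AF in \<open>simp add: xcm_axioms_def\<close>)
  show "\<exists>g. chain_map (Ab_Cr C) A g \<and> cr_mor_eq C (cr_mor_comp (U_mor g) (cr_unit C)) F"
    using xcm.gmap_chain[OF x] xcm.gmap_eq[OF x] by blast
next
  fix C :: "('o, 'm, 'e) crossed_cx" and A :: "'a chain_cx" and F :: "('o, 'm, 'e, 'a, 'a \<times> 'a, 'a) cr_mor"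
    and g g' :: "nat \<Rightarrow> ('o, 'm, 'e) ab_elt \<Rightarrow> 'a" and n :: nat
  assume cc: "crossed_complex C" and AF: "chain_complex A \<and> cr_morphism C (U_Cr A) F"
    and gg: "chain_map (Ab_Cr C) A g \<and> cr_mor_eq C (cr_mor_comp (U_mor g) (cr_unit C)) F \<and>
                  chain_map (Ab_Cr C) A g' \<and> cr_mor_eq C (cr_mor_comp (U_mor g') (cr_unit C)) F"
  have x: "xcm C A F" by (rule xcm.intro[OF xc.intro[OF cc]]) (use AF in \<open>simp add: xcm_axioms_def\<close>)
  show "\<forall>x\<in>carrier (cgr (Ab_Cr C) n). g n x = g' n x"
    using xcm.uniq[OF x] gg by blast
qed


end
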